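(* Let $n\ge 0$, let $T$ be a triangulation of a regular polygon with $n+3$ vertices and let $\Theta:\mathcal{C}_T\to\operatorname{Mod}{Q}_T$ be the functor described in the context. Then $\Theta$ is fully faithful.
   Context: Diagonals of the polygon are called roots. Those in $T$ are negative roots, indexed by a set $I$, the one indexed by $i$ being written $-\alpha_i$; the others are positive roots. If $-\alpha_i,-\alpha_j$ bound a common triangle of $T$ with common vertex $x$, set $-\alpha_i<-\alpha_j$ if the minimal-angle rotation around $x$ sending the line through $-\alpha_i$ to that through $-\alpha_j$ is counterclockwise. ${Q}_T$ is the quiver with vertex set $I$ and an arrow $j\to i$ whenever $-\alpha_i,-\alpha_j$ bound a common triangle and $-\alpha_i<-\alpha_j$; $\operatorname{Mod}{Q}_T$ is the category of finite-dimensional complex representations of ${Q}_T$ in which the composition of any two successive arrows in a triangle of ${Q}_T$ is zero. $\operatorname{Supp}\alpha$ is the set of $i\in I$ with $-\alpha_i$ crossing $\alpha$. A pivoting elementary move $P_v$ (pivot $v$) sends a positive root $[v,w]$ to the positive root $[v,w+1]$, vertices being labelled cyclically counterclockwise (equivalently: the two diagonals share $v$, their other endpoints form a border edge, and the rotation about $v$ is counterclockwise). $\mathcal{C}_T$ is the $\mathbb{C}$-linear additive category with objects direct sums of positive roots and $\operatorname{Hom}(\alpha,\alpha')$ the span of pivoting paths from $\alpha$ to $\alpha'$ modulo mesh relations: any two ways of going from a diagonal to another by two consecutive pivoting moves with distinct pivots are equal, except that a composite whose intermediate diagonal is a border edge or a negative root is replaced by zero; paths differing by such a change in two consecutive moves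 are identified. $\Theta$ is the $\mathbb{C}$-linear additive functor sending a positive root $\alpha$ to the representation with $\mathbb{C}$ at vertices of $\operatorname{Supp}\alpha$, $0$ elsewhere, and identity maps along arrows between vertices of $\operatorname{Supp}\alpha$ (zero otherwise), and sending a pivoting move $\alpha\to\alpha'$ to the morphism with component $\mathrm{id}_{\mathbb{C}}$ at each $i\in\operatorname{Supp}\alpha\cap\operatorname{Supp}\alpha'$ and $0$ elsewhere. *)

theory Defs
  imports Complex_Main
begin

text \<open>Polygon with N vertices labelled 0..N-1 cyclically counterclockwise.
  Diagonals/edges are 2-element vertex sets.\<close>

definition cdist :: "nat \<Rightarrow> nat \<Rightarrow> nat \<Rightarrow> nat" where
  "cdist N a c = (c + N - a) mod N"

definition in_arc :: "nat \<Rightarrow> nat \<Rightarrow> nat \<Rightarrow> nat \<Rightarrow> bool" where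
  "in_arc N a b c \<longleftrightarrow> 0 < cdist N a c \<and> cdist N a c < cdist N a b"

definition border_edge :: "nat \<Rightarrow> nat set \<Rightarrow> bool" where
  "border_edge N e \<longleftrightarrow> (\<exists>a<N. e = {a, (a + 1) mod N})"

definition diagonal :: "nat \<Rightarrow> nat set \<Rightarrow> bool" where
  "diagonal N d \<longleftrightarrow> (\<exists>a b. a < N \<and> b < N \<and> a \<noteq> b \<and> d = {a, b}) \<and> \<not> border_edge N d"

definition crosses :: "nat \<Rightarrow> nat set \<Rightarrow> nat set \<Rightarrow> bool" where
  "crosses N d e \<longleftrightarrow> (\<exists>a b c c'. d = {a, b} \<and> e = {c, c'} \<and> in_arc N a b c \<and> in_arc N b a c')"

definition triangulation :: "nat \<Rightarrow> nat set set \<Rightarrow> bool" where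
  "triangulation N T \<longleftrightarrow> T \<subseteq> {d. diagonal N d}
     \<and> (\<forall>d\<in>T. \<forall>e\<in>T. \<not> crosses N d e)
     \<and> (\<forall>d. diagonal N d \<and> d \<notin> T \<longrightarrow> (\<exists>e\<in>T. crosses N d e))"

definition pos_root :: "nat \<Rightarrow> nat set set \<Rightarrow> nat set \<Rightarrow> bool" where
  "pos_root N T d \<longleftrightarrow> diagonal N d \<and> d \<notin> T"

definition supp :: "nat \<Rightarrow> nat set set \<Rightarrow> nat set \<Rightarrow> nat set set" where
  "supp N T \<alpha> = {i\<in>T. crosses N i \<alpha>}"

definition pivot_move :: "nat \<Rightarrow> nat set \<Rightarrow> nat set \<Rightarrow> bool" where
  "pivot_move N \<beta> \<gamma> \<longleftrightarrow> (\<exists>v w. \<beta> = {v, w} \<and> \<gamma> = {v, (w + 1) mod N})"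

text \<open>pivoting paths in C_T: nonempty sequences of positive roots related by moves
  (a one-element list is the identity path)\<close>
definition piv_path :: "nat \<Rightarrow> nat set set \<Rightarrow> nat set list \<Rightarrow> bool" where
  "piv_path N T ps \<longleftrightarrow> ps \<noteq> [] \<and> (\<forall>d\<in>set ps. pos_root N T d)
     \<and> (\<forall>k. Suc k < length ps \<longrightarrow> pivot_move N (ps ! k) (ps ! Suc k))"

text \<open>arrow j -> i of Q_T: i, j bound a common triangle with common vertex x
  (i = {x,p}, j = {x,q}, third side {p,q} in T or a border edge), and -alpha_i < -alpha_j,
  i.e. rotating i counterclockwise about x reaches j (q is counterclockwise after p seen from x).\<close>
definition arrow :: "nat \<Rightarrow> nat set set \<Rightarrow> nat set \<Rightarrow> nat set \<Rightarrow> bool" where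
  "arrow N T j i \<longleftrightarrow> i \<in> T \<and> j \<in> T \<and>
     (\<exists>x p q. i = {x, p} \<and> j = {x, q} \<and> p \<noteq> q \<and> ({p, q} \<in> T \<or> border_edge N {p, q})
        \<and> cdist N x p < cdist N x q)"

text \<open>Matrices as entry functions; representations as (dimension vector, arrow maps).
  The matrix attached to arrow j -> i is  mp j i  of size dim i x dim j.\<close>
type_synonym cmat = "nat \<Rightarrow> nat \<Rightarrow> complex"
type_synonym rep = "(nat set \<Rightarrow> nat) \<times> (nat set \<Rightarrow> nat set \<Rightarrow> cmat)"

definition mmul :: "cmat \<Rightarrow> cmat \<Rightarrow> nat \<Rightarrow> cmat" where
  "mmul A B k = (\<lambda>r c. \<Sum>l<k. A r l * B l c)"

definition rep_hom :: "nat \<Rightarrow> nat set set \<Rightarrow> rep \<Rightarrow> rep \<Rightarrow> (nat set \<Rightarrow> cmat) set" where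
  "rep_hom N T V W = {f.
     (\<forall>i. i \<notin> T \<longrightarrow> f i = (\<lambda>r c. 0))
   \<and> (\<forall>i r c. (fst W i \<le> r \<or> fst V i \<le> c) \<longrightarrow> f i r c = 0)
   \<and> (\<forall>i j. arrow N T j i \<longrightarrow>
        mmul (snd W j i) (f j) (fst W j) = mmul (f i) (snd V j i) (fst V i))}"

definition Theta_obj :: "nat \<Rightarrow> nat set set \<Rightarrow> nat set \<Rightarrow> rep" where
  "Theta_obj N T \<alpha> =
     ((\<lambda>i. if i \<in> supp N T \<alpha> then 1 else 0),
      (\<lambda>j i r c. if j \<in> supp N T \<alpha> \<and> i \<in> supp N T \<alpha> \<and> r = 0 \<and> c = 0 then 1 else 0))"

definition Theta_move :: "nat \<Rightarrow> nat set set \<Rightarrow> nat set \<Rightarrow> nat set \<Rightarrow> nat set \<Rightarrow> cmat" where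
  "Theta_move N T \<beta> \<gamma> = (\<lambda>i r c. if i \<in> supp N T \<beta> \<and> i \<in> supp N T \<gamma> \<and> r = 0 \<and> c = 0 then 1 else 0)"

definition Theta_id :: "nat \<Rightarrow> nat set set \<Rightarrow> nat set \<Rightarrow> nat set \<Rightarrow> cmat" where
  "Theta_id N T \<beta> = (\<lambda>i r c. if i \<in> supp N T \<beta> \<and> r = 0 \<and> c = 0 then 1 else 0)"

fun Theta_path :: "nat \<Rightarrow> nat set set \<Rightarrow> nat set list \<Rightarrow> nat set \<Rightarrow> cmat" where
  "Theta_path N T [] = (\<lambda>i r c. 0)"
| "Theta_path N T [\<beta>] = Theta_id N T \<beta>"
| "Theta_path N T (\<beta> # \<gamma> # rest) =
     (\<lambda>i. mmul (Theta_path N T (\<gamma> # rest) i) (Theta_move N T \<beta> \<gamma> i) (fst (Theta_obj N T \<gamma>) i))"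

text \<open>Free vector space on pivoting paths from alpha to alpha' (finitely supported coefficients)\<close>
definition free_hom :: "nat \<Rightarrow> nat set set \<Rightarrow> nat set \<Rightarrow> nat set \<Rightarrow> (nat set list \<Rightarrow> complex) set" where
  "free_hom N T \<alpha> \<alpha>' = {c. finite {p. c p \<noteq> 0} \<and>
     (\<forall>p. c p \<noteq> 0 \<longrightarrow> piv_path N T p \<and> hd p = \<alpha> \<and> last p = \<alpha>')}"

definition Theta_lin :: "nat \<Rightarrow> nat set set \<Rightarrow> (nat set list \<Rightarrow> complex) \<Rightarrow> nat set \<Rightarrow> cmat" where
  "Theta_lin N T c = (\<lambda>i r s. \<Sum>p\<in>{p. c p \<noteq> 0}. c p * Theta_path N T p i r s)"

text \<open>Mesh relations: for beta = {a,b}, the two two-step paths with distinct pivots to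
  delta = {a+1,b+1} pass through {a,b+1} and {a+1,b}. They are identified; if the second
  intermediate is a border edge or a negative root, the first composite is zero.\<close>
definition mesh_gens :: "nat \<Rightarrow> nat set set \<Rightarrow> nat set \<Rightarrow> nat set \<Rightarrow> (nat set list \<Rightarrow> complex) set" where
  "mesh_gens N T \<alpha> \<alpha>' = {g. \<exists>p q a b.
     (let \<beta> = {a, b}; \<gamma>1 = {a, (b + 1) mod N}; \<gamma>2 = {(a + 1) mod N, b};
          \<delta> = {(a + 1) mod N, (b + 1) mod N};
          w1 = p @ [\<beta>, \<gamma>1, \<delta>] @ q; w2 = p @ [\<beta>, \<gamma>2, \<delta>] @ q
      in piv_path N T w1 \<and> hd w1 = \<alpha> \<and> last w1 = \<alpha>' \<and>
         (if pos_root N T \<gamma>2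
          then g = (\<lambda>w. (if w = w1 then 1 else 0) - (if w = w2 then 1 else 0))
          else (border_edge N \<gamma>2 \<or> \<gamma>2 \<in> T) \<and> g = (\<lambda>w. if w = w1 then 1 else 0)))}"

definition mesh_span :: "nat \<Rightarrow> nat set set \<Rightarrow> nat set \<Rightarrow> nat set \<Rightarrow> (nat set list \<Rightarrow> complex) set" where
  "mesh_span N T \<alpha> \<alpha>' = {g. \<exists>S co. finite S \<and> S \<subseteq> mesh_gens N T \<alpha> \<alpha>' \<and>
     g = (\<lambda>w. \<Sum>h\<in>S. co h * h w)}"

end

theory Submission
  imports Defs
begin

definition pi :: "nat \<Rightarrow> int \<Rightarrow> int \<Rightarrow> nat set" where
  "pi N x y = {nat (x mod int N), nat (y mod int N)}"

definition strip :: "nat \<Rightarrow> int \<Rightarrow> int \<Rightarrow> bool" where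
  "strip N x y \<longleftrightarrow> 2 \<le> y - x \<and> y - x \<le> int N - 2"

lemma modeq_cases:
  fixes a b :: int assumes "a mod M = b mod M" "M > 0"
  shows "a = b \<or> a + M \<le> b \<or> b + M \<le> a"
proof -
  have "M dvd (a - b)" using assms by (simp add: mod_eq_dvd_iff)
  then obtain k where k: "a - b = M * k" by blast
  consider "k = 0" | "k \<ge> 1" | "k \<le> -1" by linarith
  then show ?thesis
  proof cases
    case 1 then show ?thesis using k by simp
  next
    case 2 then have "M * k \<ge> M" using assms(2) by (simp add: mult_le_cancel_left1)
    then show ?thesis using k by linarith
  next
    case 3 then have "M * k \<le> - M" using assms(2)
      by (metis mult.right_neutral mult_le_cancel_left_pos mult_minus_right)
    then show ?thesis using k by linarith
  qed
qed

lemma nat_mod_inj: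
  fixes a b :: int assumes "M > 0"
  shows "nat (a mod M) = nat (b mod M) \<longleftrightarrow> a mod M = b mod M"
  using assms by (metis eq_nat_nat_iff pos_mod_sign)

lemma pi_eq:
  assumes "N > 0"
  shows "pi N x y = pi N u v \<longleftrightarrow>
    (x mod int N = u mod int N \<and> y mod int N = v mod int N) \<or>
    (x mod int N = v mod int N \<and> y mod int N = u mod int N)"
  using assms unfolding pi_def by (auto simp: doubleton_eq_iff nat_mod_inj)

lemma pi_shift: "pi N (x + int N) y = pi N x y" "pi N x (y + int N) = pi N x y"
  "pi N x y = pi N y x"
  unfolding pi_def by auto

lemma cdist_int:
  assumes "a < N" "c < N"
  shows "int (cdist N a c) = (int c - int a) mod int N"
proof -
  have "int (cdist N a c) = int ((c + N - a) mod N)" by (simp add: cdist_def)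
  also have "\<dots> = int (c + N - a) mod int N" by (simp add: zmod_int)
  also have "int (c + N - a) = int c - int a + int N" using assms by simp
  finally show ?thesis by simp
qed

lemma cdist_pi:
  assumes "N > 0"
  shows "int (cdist N (nat (X mod int N)) (nat (Z mod int N))) = (Z - X) mod int N"
proof -
  have "int (cdist N (nat (X mod int N)) (nat (Z mod int N))) =
     (int (nat (Z mod int N)) - int (nat (X mod int N))) mod int N"
    using assms by (intro cdist_int) (simp_all add: nat_less_iff)
  also have "\<dots> = (Z mod int N - X mod int N) mod int N" using assms by simp
  also have "\<dots> = (Z - X) mod int N" by (simp add: mod_diff_eq)
  finally show ?thesis .
qed

lemma in_arc_pi:
  assumes "N > 0"
  shows "in_arc N (nat (X mod int N)) (nat (Y mod int N)) (nat (Z mod int N)) \<longleftrightarrow>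
     0 < (Z - X) mod int N \<and> (Z - X) mod int N < (Y - X) mod int N"
  unfolding in_arc_def using cdist_pi[OF assms] by (metis of_nat_less_iff of_nat_0)

lemma nat_res: "c < N \<Longrightarrow> c = nat (int c mod int N)"
  by (simp add: nat_mod_distrib)

lemma mod_small: "0 \<le> (z::int) \<Longrightarrow> z < M \<Longrightarrow> z mod M = z" by simp

lemma cross_lift1:
  assumes N: "N > 0" and s: "strip N x y" and e: "\<forall>z\<in>e. z < N"
  shows "crosses N (pi N x y) e \<longleftrightarrow> (\<exists>u v. x<u \<and> u<y \<and> y<v \<and> v<x+int N \<and> e = pi N u v)"
proof
  assume "\<exists>u v. x<u \<and> u<y \<and> y<v \<and> v<x+int N \<and> e = pi N u v"
  then obtain u v where uv: "x<u" "u<y" "y<v" "v<x+int N" "e = pi N u v" by blast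
  have yx: "(y - x) mod int N = y - x" using s unfolding strip_def by (intro mod_small) auto
  have xy: "(x - y) mod int N = x - y + int N"
  proof -
    have "(x - y) mod int N = (x - y + int N) mod int N" by simp
    also have "\<dots> = x - y + int N" using s unfolding strip_def by (intro mod_small) auto
    finally show ?thesis .
  qed
  have 1: "in_arc N (nat (x mod int N)) (nat (y mod int N)) (nat (u mod int N))"
    unfolding in_arc_pi[OF N] using uv yx by (subst mod_small) auto
  have 2: "in_arc N (nat (y mod int N)) (nat (x mod int N)) (nat (v mod int N))"
    unfolding in_arc_pi[OF N] using uv xy by (subst mod_small) auto
  show "crosses N (pi N x y) e" unfolding crosses_def
    apply (rule exI[of _ "nat (x mod int N)"], rule exI[of _ "nat (y mod int N)"])
    apply (rule exI[of _ "nat (u mod int N)"], rule exI[of _ "nat (v mod int N)"])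
    using 1 2 uv(5) unfolding pi_def by simp
next
  assume "crosses N (pi N x y) e"
  then obtain a b c c' where abc: "pi N x y = {a,b}" "e = {c,c'}" "in_arc N a b c" "in_arc N b a c'"
    unfolding crosses_def by blast
  have cN: "c < N" "c' < N" using e abc(2) by auto
  have c: "c = nat (int c mod int N)" "c' = nat (int c' mod int N)" using cN nat_res by auto
  have yx: "(y - x) mod int N = y - x" using s unfolding strip_def by (intro mod_small) auto
  have xy: "(x - y) mod int N = x - y + int N"
  proof -
    have "(x - y) mod int N = (x - y + int N) mod int N" by simp
    also have "\<dots> = x - y + int N" using s unfolding strip_def by (intro mod_small) auto
    finally show ?thesis .
  qed
  have gen: "\<exists>u v. x<u \<and> u<y \<and> y<v \<and> v<x+int N \<and> {C, C'} = pi N u v"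
    if h1: "in_arc N (nat (x mod int N)) (nat (y mod int N)) C"
       and h2: "in_arc N (nat (y mod int N)) (nat (x mod int N)) C'" and CN: "C < N" "C' < N" for C C'
  proof -
    have C: "C = nat (int C mod int N)" "C' = nat (int C' mod int N)" using CN nat_res by auto
    have h1': "in_arc N (nat (x mod int N)) (nat (y mod int N)) (nat (int C mod int N))"
      using h1 C(1) by metis
    have h2': "in_arc N (nat (y mod int N)) (nat (x mod int N)) (nat (int C' mod int N))"
      using h2 C(2) by metis
    have a1: "0 < (int C - x) mod int N" "(int C - x) mod int N < y - x"
      using h1' yx by (simp_all only: in_arc_pi[OF N])
    have a2: "0 < (int C' - y) mod int N" "(int C' - y) mod int N < x - y + int N"
      using h2' xy by (simp_all only: in_arc_pi[OF N])
    define u where "u = x + (int C - x) mod int N"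
    define v where "v = y + (int C' - y) mod int N"
    have um: "u mod int N = int C mod int N" unfolding u_def by (simp add: mod_add_right_eq)
    have vm: "v mod int N = int C' mod int N" unfolding v_def by (simp add: mod_add_right_eq)
    have "{C, C'} = pi N u v" unfolding pi_def um vm using C by simp
    moreover have "x<u \<and> u<y \<and> y<v \<and> v<x+int N" using a1 a2 unfolding u_def v_def by linarith
    ultimately show ?thesis by blast
  qed
  from abc(1) have "(a = nat (x mod int N) \<and> b = nat (y mod int N)) \<or> (a = nat (y mod int N) \<and> b = nat (x mod int N))"
    unfolding pi_def by (auto simp: doubleton_eq_iff)
  then show "\<exists>u v. x<u \<and> u<y \<and> y<v \<and> v<x+int N \<and> e = pi N u v"
  proof
    assume "a = nat (x mod int N) \<and> b = nat (y mod int N)"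
    then show ?thesis using gen[of c c'] abc cN by auto
  next
    assume "a = nat (y mod int N) \<and> b = nat (x mod int N)"
    then show ?thesis using gen[of c' c] abc cN by (auto simp: insert_commute)
  qed
qed

lemma modd:
  fixes X Y M :: int
  assumes "0 \<le> X" "X < M" "0 \<le> Y" "Y < M"
  shows "(X - Y) mod M = (if Y \<le> X then X - Y else X - Y + M)"
proof (cases "Y \<le> X")
  case True then show ?thesis using assms by (simp add: mod_small)
next
  case False
  have "(X - Y) mod M = (X - Y + M) mod M" by simp
  also have "\<dots> = X - Y + M" using assms False by (intro mod_small) auto
  finally show ?thesis using False by simp
qed

lemma in_arc_nat:
  assumes "a < N" "b < N" "c < N"
  shows "in_arc N a b c \<longleftrightarrow>
    (let A = int a; B = int b; C = int c;
         dc = (if A \<le> C then C - A else C - A + int N);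
         db = (if A \<le> B then B - A else B - A + int N) in 0 < dc \<and> dc < db)"
proof -
  have 1: "int (cdist N a c) = (if int a \<le> int c then int c - int a else int c - int a + int N)"
    using assms cdist_int[of a N c] modd[of "int c" "int N" "int a"] by simp
  have 2: "int (cdist N a b) = (if int a \<le> int b then int b - int a else int b - int a + int N)"
    using assms cdist_int[of a N b] modd[of "int b" "int N" "int a"] by simp
  have "in_arc N a b c \<longleftrightarrow> 0 < int (cdist N a c) \<and> int (cdist N a c) < int (cdist N a b)"
    unfolding in_arc_def by linarith
  then show ?thesis unfolding 1 2 Let_def .
qed

lemma arc_sym_int:
  fixes A B C D M :: int
  assumes "0 \<le> A" "A < M" "0 \<le> B" "B < M" "0 \<le> C" "C < M" "0 \<le> D" "D < M"
  and h1: "0 < (if C \<le> A then A - C else A - C + M)" "(if C \<le> A then A - C else A - C + M) < (if C \<le> D then D - C else D - C + M)"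
  and h2: "0 < (if D \<le> B then B - D else B - D + M)" "(if D \<le> B then B - D else B - D + M) < (if D \<le> C then C - D else C - D + M)"
  shows "0 < (if A \<le> D then D - A else D - A + M) \<and> (if A \<le> D then D - A else D - A + M) < (if A \<le> B then B - A else B - A + M)"
  using assms by (cases "C \<le> A"; cases "C \<le> D"; cases "D \<le> B"; cases "A \<le> D"; cases "A \<le> B"; cases "D \<le> C"; simp)

lemma arc_sym1:
  assumes "a < N" "b < N" "c < N" "d < N"
    and "in_arc N c d a" "in_arc N d c b"
  shows "in_arc N a b d"
proof -
  have h: "int a < int N" "int b < int N" "int c < int N" "int d < int N" using assms(1-4) by auto
  show ?thesis
  using assms(5,6) unfolding in_arc_nat[OF assms(1,2,4)] 
    in_arc_nat[OF assms(3,4,1)] in_arc_nat[OF assms(4,3,2)] Let_def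
  using arc_sym_int[of "int a" "int N" "int b" "int c" "int d"] h by simp
qed

lemma arc_sym:
  assumes "a < N" "b < N" "c < N" "d < N"
    and "in_arc N c d a" "in_arc N d c b"
  shows "in_arc N a b d \<and> in_arc N b a c"
  using arc_sym1[OF assms] arc_sym1[OF assms(2,1,4,3) assms(6,5)] by blast

lemma crosses_sym:
  assumes "\<forall>z\<in>d. z < N" "\<forall>z\<in>e. z < N" "crosses N d e"
  shows "crosses N e d"
proof -
  obtain a b c c' where h: "d = {a,b}" "e = {c,c'}" "in_arc N a b c" "in_arc N b a c'"
    using assms(3) unfolding crosses_def by blast
  have lt: "a < N" "b < N" "c < N" "c' < N" using assms(1,2) h by auto
  have "in_arc N c c' b \<and> in_arc N c' c a" using arc_sym[OF lt(3,4,1,2) h(3,4)] by blast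
  then show ?thesis unfolding crosses_def using h by blast
qed

lemma pi_lt: "N > 0 \<Longrightarrow> \<forall>z\<in>pi N x y. z < N"
  unfolding pi_def by (auto simp: nat_less_iff)

lemma cross_lift2:
  assumes N: "N > 0" and s: "strip N x y" and e: "\<forall>z\<in>e. z < N"
  shows "crosses N e (pi N x y) \<longleftrightarrow> (\<exists>u v. x<u \<and> u<y \<and> y<v \<and> v<x+int N \<and> e = pi N u v)"
proof -
  have p: "\<forall>z\<in>pi N x y. z < N" using pi_lt[OF N] .
  show ?thesis using crosses_sym[OF p e] crosses_sym[OF e p] cross_lift1[OF N s e] by blast
qed

lemma mod_plus1_nat:
  assumes "N > 0"
  shows "nat ((x + 1) mod int N) = (nat (x mod int N) + 1) mod N"
proof -
  have "int ((nat (x mod int N) + 1) mod N) = (int (nat (x mod int N)) + 1) mod int N"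
    by (simp add: zmod_int ac_simps)
  also have "\<dots> = (x mod int N + 1) mod int N" using assms by simp
  also have "\<dots> = (x + 1) mod int N" by (simp add: mod_add_left_eq)
  finally show ?thesis by (metis nat_int)
qed

lemma pi_mem_int:
  assumes N: "N > 0" and "pi N x y = {a, b}"
  shows "(x mod int N = int a \<and> y mod int N = int b) \<or> (x mod int N = int b \<and> y mod int N = int a)"
proof -
  have "(nat (x mod int N) = a \<and> nat (y mod int N) = b) \<or> (nat (x mod int N) = b \<and> nat (y mod int N) = a)"
    using assms(2) unfolding pi_def by (simp add: doubleton_eq_iff)
  moreover have "x mod int N \<ge> 0" "y mod int N \<ge> 0" using N by auto
  ultimately show ?thesis by auto
qed

lemma border_strip:
  assumes N: "N > 0" and s: "strip N x y"
  shows "\<not> border_edge N (pi N x y)"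
proof
  assume "border_edge N (pi N x y)"
  then obtain a where a: "a < N" "pi N x y = {a, (a+1) mod N}" unfolding border_edge_def by blast
  have a1: "int ((a+1) mod N) = (int a + 1) mod int N" by (simp add: zmod_int ac_simps)
  have ia: "int a = int a mod int N" using a(1) by simp
  from pi_mem_int[OF N a(2)] a1
  have "(x mod int N = int a \<and> y mod int N = (int a + 1) mod int N) \<or>
        (y mod int N = int a \<and> x mod int N = (int a + 1) mod int N)" by auto
  then have "y mod int N = (x + 1) mod int N \<or> x mod int N = (y + 1) mod int N"
    by (metis mod_add_left_eq)
  then show False
  proof
    assume "y mod int N = (x + 1) mod int N"
    from modeq_cases[OF this] N s show False unfolding strip_def by auto
  next
    assume "x mod int N = (y + 1) mod int N"
    from modeq_cases[OF this] N s show False unfolding strip_def by auto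
  qed
qed

lemma border_1:
  assumes N: "N > 0" and "y = x + 1"
  shows "border_edge N (pi N x y)"
  unfolding border_edge_def pi_def using assms mod_plus1_nat[OF N, of x]
  by (intro exI[of _ "nat (x mod int N)"]) (simp add: nat_less_iff)

lemma border_2:
  assumes N: "N > 0" and "y = x + int N - 1"
  shows "border_edge N (pi N x y)"
proof -
  have "x = y + 1 - int N" using assms by simp
  moreover have "(y + 1 - int N) mod int N = (y+1) mod int N"
    using mod_add_self2[of "y+1-int N" "int N"] by simp
  ultimately have "pi N x y = pi N y (y + 1)" unfolding pi_def by (simp add: insert_commute)
  then show ?thesis using border_1[OF N, of "y+1" y] by simp
qed

lemma pi_diag:
  assumes N: "N > 0" and s: "strip N x y"
  shows "diagonal N (pi N x y)"
proof -
  have "x mod int N \<noteq> y mod int N"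
  proof
    assume "x mod int N = y mod int N"
    from modeq_cases[OF this] N s show False unfolding strip_def by auto
  qed
  then have "nat (x mod int N) \<noteq> nat (y mod int N)" using nat_mod_inj N by auto
  moreover have "nat (x mod int N) < N" "nat (y mod int N) < N" using N by (auto simp: nat_less_iff)
  ultimately show ?thesis unfolding diagonal_def using border_strip[OF N s]
    unfolding pi_def by blast
qed

lemma diag_lift:
  assumes N: "N > 0" and d: "diagonal N d"
  shows "\<exists>x y. strip N x y \<and> d = pi N x y \<and> 0 \<le> x \<and> x < int N"
proof -
  obtain a b where ab: "a < N" "b < N" "a \<noteq> b" "d = {a,b}" and nb: "\<not> border_edge N d"
    using d unfolding diagonal_def by blast
  have g: "\<exists>x y. strip N x y \<and> d = pi N x y \<and> 0 \<le> x \<and> x < int N"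
    if h: "a' < b'" "b' < N" "d = {a', b'}" for a' b'
  proof -
    have pd: "pi N (int a') (int b') = d" using h unfolding pi_def by (simp add: nat_mod_distrib)
    have "b' \<noteq> a' + 1"
    proof
      assume "b' = a' + 1"
      then have "border_edge N (pi N (int a') (int b'))" by (intro border_1[OF N]) simp
      then show False using nb pd by simp
    qed
    moreover have "b' \<noteq> a' + N - 1"
    proof
      assume "b' = a' + N - 1"
      then have "border_edge N (pi N (int a') (int b'))" using h by (intro border_2[OF N]) auto
      then show False using nb pd by simp
    qed
    ultimately have "strip N (int a') (int b')" unfolding strip_def using h by linarith
    moreover have "0 \<le> int a'" "int a' < int N" using h by auto
    ultimately show ?thesis using pd by metis
  qed
  show ?thesis
  proof (cases "a < b")
    case True then show ?thesis using g ab by blast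
  next
    case False then have "b < a" using ab by simp
    moreover have "d = {b, a}" using ab by blast
    ultimately show ?thesis using g[of b a] ab by blast
  qed
qed

lemma cr_strip:
  assumes "strip N x y" "x<u" "u<y" "y<v" "v<x+int N"
  shows "strip N u v"
  using assms unfolding strip_def by auto

locale tri =
  fixes N :: nat and T :: "nat set set"
  assumes tri: "triangulation N T" and Npos: "N > 0"
begin

definition good :: "int \<Rightarrow> int \<Rightarrow> bool" where
  "good x y \<longleftrightarrow> strip N x y \<and> pi N x y \<notin> T"

definition Tpt :: "int \<Rightarrow> int \<Rightarrow> bool" where
  "Tpt x y \<longleftrightarrow> strip N x y \<and> pi N x y \<in> T"

lemma T_diag: "d \<in> T \<Longrightarrow> diagonal N d"
  using tri unfolding triangulation_def by auto

lemma T_lt: "d \<in> T \<Longrightarrow> \<forall>z\<in>d. z < N"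
  using T_diag unfolding diagonal_def by auto

lemma noncross:
  assumes "Tpt x y" "Tpt u v"
  shows "\<not> (x<u \<and> u<y \<and> y<v \<and> v<x+int N)"
proof
  assume h: "x<u \<and> u<y \<and> y<v \<and> v<x+int N"
  have "crosses N (pi N u v) (pi N x y)"
    using cross_lift2[OF Npos, of x y "pi N u v"] assms h T_lt unfolding Tpt_def by blast
  then show False using tri assms unfolding triangulation_def Tpt_def by blast
qed

lemma maxim:
  assumes "good x y"
  shows "\<exists>u v. x<u \<and> u<y \<and> y<v \<and> v<x+int N \<and> Tpt u v"
proof -
  have "diagonal N (pi N x y)" using pi_diag[OF Npos] assms unfolding good_def by blast
  then obtain e where e: "e \<in> T" "crosses N (pi N x y) e"
    using tri assms unfolding triangulation_def good_def by blast
  then obtain u v where uv: "x<u \<and> u<y \<and> y<v \<and> v<x+int N" "e = pi N u v"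
    using cross_lift1[OF Npos, of x y e] assms T_lt unfolding good_def by blast
  then show ?thesis using e cr_strip[of N x y u v] assms unfolding Tpt_def good_def by blast
qed

definition supp_l :: "int \<Rightarrow> int \<Rightarrow> nat set \<Rightarrow> bool" where
  "supp_l x y t \<longleftrightarrow> (\<exists>u v. x<u \<and> u<y \<and> y<v \<and> v<x+int N \<and> t = pi N u v)"

lemma supp_pi:
  assumes "strip N x y"
  shows "t \<in> supp N T (pi N x y) \<longleftrightarrow> t \<in> T \<and> supp_l x y t"
  unfolding supp_def supp_l_def using cross_lift2[OF Npos assms] T_lt by auto

end

lemma Theta_path_formula:
  "p \<noteq> [] \<Longrightarrow> Theta_path N T p i r c =
     (if r = 0 \<and> c = 0 \<and> (\<forall>\<beta>\<in>set p. i \<in> supp N T \<beta>) then 1 else 0)"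
proof (induction p arbitrary: r c rule: induct_list012)
  case 1 then show ?case by simp
next
  case (2 \<beta>) then show ?case by (simp add: Theta_id_def)
next
  case (3 \<beta> \<gamma> rest)
  show ?case
  proof (cases "i \<in> supp N T \<gamma>")
    case True
    then have "Theta_path N T (\<beta> # \<gamma> # rest) i r c =
       Theta_path N T (\<gamma> # rest) i r 0 * Theta_move N T \<beta> \<gamma> i 0 c"
      by (simp add: mmul_def Theta_obj_def)
    also have "\<dots> = (if r = 0 \<and> c = 0 \<and> (\<forall>\<beta>'\<in>set (\<beta> # \<gamma> # rest). i \<in> supp N T \<beta>') then 1 else 0)"
      using "3.IH"(2)[of r 0] True by (auto simp: Theta_move_def)
    finally show ?thesis .
  next
    case False
    then have "Theta_path N T (\<beta> # \<gamma> # rest) i r c = 0"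
      by (simp add: mmul_def Theta_obj_def)
    then show ?thesis using False by auto
  qed
qed

lemma piv_path_single: "piv_path N T [a] \<longleftrightarrow> pos_root N T a"
  unfolding piv_path_def by auto

lemma piv_path_Cons2:
  "piv_path N T (a # b # r) \<longleftrightarrow> pos_root N T a \<and> pivot_move N a b \<and> piv_path N T (b # r)"
proof
  assume h: "piv_path N T (a # b # r)"
  then have hm: "\<And>k. Suc k < length (a # b # r) \<Longrightarrow> pivot_move N ((a#b#r) ! k) ((a#b#r) ! Suc k)"
    unfolding piv_path_def by blast
  have "pivot_move N a b" using hm[of 0] by simp
  moreover have "\<forall>k. Suc k < length (b # r) \<longrightarrow> pivot_move N ((b#r) ! k) ((b#r) ! Suc k)"
  proof (intro allI impI)
    fix k assume "Suc k < length (b # r)"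
    then have "Suc (Suc k) < length (a # b # r)" by simp
    from hm[OF this] show "pivot_move N ((b#r) ! k) ((b#r) ! Suc k)" by simp
  qed
  ultimately show "pos_root N T a \<and> pivot_move N a b \<and> piv_path N T (b # r)"
    using h unfolding piv_path_def by simp
next
  assume h: "pos_root N T a \<and> pivot_move N a b \<and> piv_path N T (b # r)"
  then have hm: "\<And>k. Suc k < length (b # r) \<Longrightarrow> pivot_move N ((b#r) ! k) ((b#r) ! Suc k)"
    unfolding piv_path_def by blast
  have "\<forall>k. Suc k < length (a # b # r) \<longrightarrow> pivot_move N ((a#b#r) ! k) ((a#b#r) ! Suc k)"
  proof (intro allI impI)
    fix k assume k: "Suc k < length (a # b # r)"
    show "pivot_move N ((a#b#r) ! k) ((a#b#r) ! Suc k)"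
    proof (cases k)
      case 0 then show ?thesis using h by simp
    next
      case (Suc j) then have "Suc j < length (b # r)" using k by simp
      from hm[OF this] show ?thesis using Suc by simp
    qed
  qed
  then show "piv_path N T (a # b # r)" using h unfolding piv_path_def by simp
qed

context tri begin

definition step :: "int \<times> int \<Rightarrow> bool \<Rightarrow> int \<times> int" where
  "step P b = (if b then (fst P + 1, snd P) else (fst P, snd P + 1))"

fun walk :: "int \<times> int \<Rightarrow> bool list \<Rightarrow> (int \<times> int) list" where
  "walk P [] = [P]"
| "walk P (b # w) = P # walk (step P b) w"

definition endp :: "int \<times> int \<Rightarrow> bool list \<Rightarrow> int \<times> int" where
  "endp P w = last (walk P w)"

definition pp :: "int \<times> int \<Rightarrow> nat set" where
  "pp q = pi N (fst q) (snd q)"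

definition img :: "int \<times> int \<Rightarrow> bool list \<Rightarrow> nat set list" where
  "img P w = map pp (walk P w)"

definition valid :: "int \<times> int \<Rightarrow> bool list \<Rightarrow> bool" where
  "valid P w \<longleftrightarrow> (\<forall>q\<in>set (walk P w). good (fst q) (snd q))"

lemma walk_ne[simp]: "walk P w \<noteq> []"
  by (cases w) auto

lemma hd_walk[simp]: "hd (walk P w) = P"
  by (cases w) auto

lemma endp_Nil[simp]: "endp P [] = P" by (simp add: endp_def)
lemma endp_Cons[simp]: "endp P (b # w) = endp (step P b) w" by (simp add: endp_def)

lemma walk_append: "walk P (u @ v) = butlast (walk P u) @ walk (endp P u) v"
  by (induction u arbitrary: P) (auto simp: endp_def)

lemma endp_append: "endp P (u @ v) = endp (endp P u) v"
  by (induction u arbitrary: P) auto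

lemma endp_formula:
  "endp P w = (fst P + int (length (filter id w)), snd P + int (length (filter Not w)))"
  by (induction w arbitrary: P) (auto simp: step_def)

lemma walk_box:
  "q \<in> set (walk P w) \<Longrightarrow> fst P \<le> fst q \<and> fst q \<le> fst (endp P w) \<and> snd P \<le> snd q \<and> snd q \<le> snd (endp P w)"
proof (induction w arbitrary: P)
  case Nil then show ?case by simp
next
  case (Cons b w)
  show ?case
  proof (cases "q = P")
    case True then show ?thesis using endp_formula[of P "b # w"] by auto
  next
    case False then have q: "q \<in> set (walk (step P b) w)" using Cons by simp
    have ih: "fst (step P b) \<le> fst q \<and> fst q \<le> fst (endp (step P b) w) \<and> snd (step P b) \<le> snd q \<and> snd q \<le> snd (endp (step P b) w)"
      using Cons.IH[OF q] .
    have st: "fst P \<le> fst (step P b)" "snd P \<le> snd (step P b)" by (auto simp: step_def)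
    show ?thesis using ih st by auto
  qed
qed

lemma last_walk: "last (walk P w) = endp P w" by (simp add: endp_def)

lemma valid_append: "valid P (u @ v) \<longleftrightarrow> valid P u \<and> valid (endp P u) v"
proof -
  have "set (walk P u) = set (butlast (walk P u)) \<union> {endp P u}"
    by (metis walk_ne append_butlast_last_id last_walk set_append empty_set list.set(2) Un_insert_right sup_bot.right_neutral)
  moreover have "endp P u \<in> set (walk (endp P u) v)" by (metis hd_walk walk_ne hd_in_set)
  ultimately show ?thesis unfolding valid_def walk_append by auto
qed

lemma valid_Cons: "valid P (b # w) \<longleftrightarrow> good (fst P) (snd P) \<and> valid (step P b) w"
  unfolding valid_def by simp

lemma valid_Nil: "valid P [] \<longleftrightarrow> good (fst P) (snd P)"
  unfolding valid_def by simp

lemma valid_start: "valid P w \<Longrightarrow> good (fst P) (snd P)"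
  by (cases w) (auto simp: valid_def)

lemma valid_end: "valid P w \<Longrightarrow> good (fst (endp P w)) (snd (endp P w))"
  unfolding valid_def by (metis last_walk walk_ne last_in_set)

lemma move_step:
  "pivot_move N (pi N x y) (pp (step (x,y) b))"
proof (cases b)
  case True
  then have "pp (step (x,y) b) = {nat (y mod int N), (nat (x mod int N) + 1) mod N}"
    unfolding pp_def step_def pi_def using mod_plus1_nat[OF Npos] by (simp add: insert_commute)
  moreover have "pi N x y = {nat (y mod int N), nat (x mod int N)}" unfolding pi_def by (simp add: insert_commute)
  ultimately show ?thesis unfolding pivot_move_def by blast
next
  case False
  then have "pp (step (x,y) b) = {nat (x mod int N), (nat (y mod int N) + 1) mod N}"
    unfolding pp_def step_def pi_def using mod_plus1_nat[OF Npos] by simp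
  moreover have "pi N x y = {nat (x mod int N), nat (y mod int N)}" unfolding pi_def by simp
  ultimately show ?thesis unfolding pivot_move_def by blast
qed

lemma good_pos: "good x y \<Longrightarrow> pos_root N T (pi N x y)"
  unfolding good_def pos_root_def using pi_diag[OF Npos] by blast

lemma valid_piv: "valid P w \<Longrightarrow> piv_path N T (img P w)"
proof (induction w arbitrary: P)
  case Nil then show ?case using good_pos by (simp add: img_def valid_def piv_path_single pp_def)
next
  case (Cons b w)
  obtain x y where P: "P = (x,y)" by (cases P)
  have v: "valid (step P b) w" using Cons.prems valid_Cons by blast
  obtain r where r: "img (step P b) w = pp (step P b) # r"
    by (cases w) (auto simp: img_def)
  have "img P (b # w) = pp P # img (step P b) w" by (simp add: img_def)
  also have "\<dots> = pp P # pp (step P b) # r" using r by simp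
  finally have e: "img P (b # w) = pp P # pp (step P b) # r" .
  have "pos_root N T (pp P)" using Cons.prems valid_Cons good_pos unfolding pp_def by blast
  moreover have "pivot_move N (pp P) (pp (step P b))" using move_step unfolding P pp_def by simp
  moreover have "piv_path N T (pp (step P b) # r)" using Cons.IH[OF v] r by simp
  ultimately show ?case using e piv_path_Cons2 by simp
qed

lemma strip_step:
  assumes "strip N x y" "diagonal N (pp (step (x,y) b))"
  shows "strip N (fst (step (x,y) b)) (snd (step (x,y) b))"
proof (cases b)
  case True
  have "y - x \<noteq> 2"
  proof
    assume "y - x = 2"
    then have "border_edge N (pi N (x+1) y)" by (intro border_1[OF Npos]) simp
    then show False using assms True unfolding diagonal_def pp_def step_def by simp
  qed
  then show ?thesis using assms True unfolding strip_def step_def by auto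
next
  case False
  have "y - x \<noteq> int N - 2"
  proof
    assume "y - x = int N - 2"
    then have "border_edge N (pi N x (y+1))" by (intro border_2[OF Npos]) simp
    then show False using assms False unfolding diagonal_def pp_def step_def by simp
  qed
  then show ?thesis using assms False unfolding strip_def step_def by auto
qed

lemma pivot_cases:
  assumes "pivot_move N (pi N x y) g"
  shows "g = pp (step (x,y) True) \<or> g = pp (step (x,y) False)"
proof -
  obtain v w where vw: "pi N x y = {v, w}" "g = {v, (w + 1) mod N}"
    using assms unfolding pivot_move_def by blast
  have "(nat (x mod int N) = v \<and> nat (y mod int N) = w) \<or> (nat (x mod int N) = w \<and> nat (y mod int N) = v)"
    using vw(1) unfolding pi_def by (auto simp: doubleton_eq_iff)
  then show ?thesis
  proof
    assume "nat (x mod int N) = v \<and> nat (y mod int N) = w"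
    then have "g = pp (step (x,y) False)" using vw(2) mod_plus1_nat[OF Npos, of y]
      unfolding pp_def step_def pi_def by simp
    then show ?thesis by blast
  next
    assume "nat (x mod int N) = w \<and> nat (y mod int N) = v"
    then have "g = pp (step (x,y) True)" using vw(2) mod_plus1_nat[OF Npos, of x]
      unfolding pp_def step_def pi_def by (simp add: insert_commute)
    then show ?thesis by blast
  qed
qed

lemma lift_path:
  "piv_path N T ps \<Longrightarrow> strip N x y \<Longrightarrow> hd ps = pi N x y \<Longrightarrow> \<exists>w. img (x,y) w = ps \<and> valid (x,y) w"
proof (induction ps arbitrary: x y rule: induct_list012)
  case 1 then show ?case by (simp add: piv_path_def)
next
  case (2 a)
  then have "good x y" using piv_path_single unfolding good_def pos_root_def by auto
  then show ?case using 2 by (intro exI[of _ "[]"]) (auto simp: img_def valid_def pp_def)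
next
  case (3 a b r)
  have h: "pos_root N T a" "pivot_move N a b" "piv_path N T (b # r)" using "3.prems"(1) piv_path_Cons2 by auto
  have a: "a = pi N x y" using "3.prems" by simp
  obtain c where c: "b = pp (step (x,y) c)" using pivot_cases h(2) a by blast
  have db: "diagonal N b" using h(3) unfolding piv_path_def pos_root_def by auto
  have s: "strip N (fst (step (x,y) c)) (snd (step (x,y) c))" using strip_step "3.prems"(2) db c by blast
  obtain w where w: "img (step (x,y) c) w = b # r" "valid (step (x,y) c) w"
    using "3.IH"(2)[OF h(3) s] c unfolding pp_def by (metis list.sel(1) prod.collapse)
  have "img (x,y) (c # w) = a # b # r" using w a by (simp add: img_def pp_def)
  moreover have "valid (x,y) (c # w)" using w(2) h(1) a unfolding valid_Cons good_def pos_root_def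
    using "3.prems"(2) by simp
  ultimately show ?case by blast
qed

end

definition ee :: "nat set list \<Rightarrow> nat set list \<Rightarrow> complex" where
  "ee p = (\<lambda>w. if w = p then 1 else 0)"

lemma span_zero: "(\<lambda>w. 0) \<in> mesh_span N T a a'"
  unfolding mesh_span_def by (intro CollectI exI[of _ "{}"]) auto

lemma span_gen: "g \<in> mesh_gens N T a a' \<Longrightarrow> g \<in> mesh_span N T a a'"
  unfolding mesh_span_def by (intro CollectI exI[of _ "{g}"] exI[of _ "\<lambda>_. 1"]) auto

lemma span_add:
  assumes "g1 \<in> mesh_span N T a a'" "g2 \<in> mesh_span N T a a'"
  shows "(\<lambda>w. g1 w + g2 w) \<in> mesh_span N T a a'"
proof -
  obtain S1 co1 where 1: "finite S1" "S1 \<subseteq> mesh_gens N T a a'" "g1 = (\<lambda>w. \<Sum>h\<in>S1. co1 h * h w)"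
    using assms(1) unfolding mesh_span_def by blast
  obtain S2 co2 where 2: "finite S2" "S2 \<subseteq> mesh_gens N T a a'" "g2 = (\<lambda>w. \<Sum>h\<in>S2. co2 h * h w)"
    using assms(2) unfolding mesh_span_def by blast
  define co where "co h = (if h \<in> S1 then co1 h else 0) + (if h \<in> S2 then co2 h else 0)" for h
  have "(\<Sum>h\<in>S1 \<union> S2. co h * h w) = g1 w + g2 w" for w
  proof -
    have "(\<Sum>h\<in>S1 \<union> S2. co h * h w) = (\<Sum>h\<in>S1 \<union> S2. (if h \<in> S1 then co1 h * h w else 0)) +
        (\<Sum>h\<in>S1 \<union> S2. (if h \<in> S2 then co2 h * h w else 0))"
    proof -
      have "co h * h w = (if h \<in> S1 then co1 h * h w else 0) + (if h \<in> S2 then co2 h * h w else 0)" for h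
        unfolding co_def by (simp add: distrib_right)
      then show ?thesis by (simp add: sum.distrib)
    qed
    also have "\<dots> = (\<Sum>h\<in>S1. co1 h * h w) + (\<Sum>h\<in>S2. co2 h * h w)"
    proof -
      have f: "finite (S1 \<union> S2)" using 1(1) 2(1) by simp
      have "(S1 \<union> S2) \<inter> S1 = S1" "(S1 \<union> S2) \<inter> S2 = S2" by auto
      then show ?thesis using sum.inter_restrict[OF f, of "\<lambda>h. co1 h * h w" S1]
         sum.inter_restrict[OF f, of "\<lambda>h. co2 h * h w" S2] by simp
    qed
    finally show ?thesis using 1(3) 2(3) by simp
  qed
  then show ?thesis unfolding mesh_span_def using 1 2
    by (intro CollectI exI[of _ "S1 \<union> S2"] exI[of _ co]) auto
qed

lemma span_scale:
  assumes "g \<in> mesh_span N T a a'"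
  shows "(\<lambda>w. k * g w) \<in> mesh_span N T a a'"
proof -
  obtain S co where 1: "finite S" "S \<subseteq> mesh_gens N T a a'" "g = (\<lambda>w. \<Sum>h\<in>S. co h * h w)"
    using assms(1) unfolding mesh_span_def by blast
  have "(\<lambda>w. k * g w) = (\<lambda>w. \<Sum>h\<in>S. (k * co h) * h w)"
    unfolding 1(3) by (simp add: sum_distrib_left mult.assoc)
  then show ?thesis unfolding mesh_span_def using 1
    by (intro CollectI exI[of _ S] exI[of _ "\<lambda>h. k * co h"]) auto
qed

lemma span_diff:
  assumes "g1 \<in> mesh_span N T a a'" "g2 \<in> mesh_span N T a a'"
  shows "(\<lambda>w. g1 w - g2 w) \<in> mesh_span N T a a'"
  using span_add[OF assms(1) span_scale[OF assms(2), of "-1"]] by simp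

lemma span_sum:
  assumes "finite A" "\<forall>x\<in>A. f x \<in> mesh_span N T a a'"
  shows "(\<lambda>w. \<Sum>x\<in>A. f x w) \<in> mesh_span N T a a'"
  using assms
proof (induction A rule: finite_induct)
  case empty then show ?case using span_zero by simp
next
  case (insert x F)
  then show ?case using span_add[of "f x" N T a a' "\<lambda>w. \<Sum>x\<in>F. f x w"] by simp
qed

lemma Theta_lin_finite:
  assumes "finite F" "{p. c p \<noteq> 0} \<subseteq> F"
  shows "Theta_lin N T c = (\<lambda>i r s. \<Sum>p\<in>F. c p * Theta_path N T p i r s)"
proof -
  have "(\<Sum>p\<in>{p. c p \<noteq> 0}. c p * Theta_path N T p i r s) = (\<Sum>p\<in>F. c p * Theta_path N T p i r s)" for i r s
    using assms by (intro sum.mono_neutral_left) auto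
  then show ?thesis unfolding Theta_lin_def by simp
qed

lemma Theta_lin_span_sum:
  assumes "finite S" "\<forall>h\<in>S. finite {p. h p \<noteq> 0}"
  shows "Theta_lin N T (\<lambda>w. \<Sum>h\<in>S. co h * h w) = (\<lambda>i r s. \<Sum>h\<in>S. co h * Theta_lin N T h i r s)"
proof -
  define F where "F = (\<Union>h\<in>S. {p. h p \<noteq> 0})"
  have F: "finite F" using assms unfolding F_def by auto
  have sub: "{p. (\<Sum>h\<in>S. co h * h p) \<noteq> 0} \<subseteq> F"
  proof
    fix p assume "p \<in> {p. (\<Sum>h\<in>S. co h * h p) \<noteq> 0}"
    then obtain h where "h \<in> S" "co h * h p \<noteq> 0"
      using sum.not_neutral_contains_not_neutral by blast
    then show "p \<in> F" unfolding F_def by auto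
  qed
  have "Theta_lin N T (\<lambda>w. \<Sum>h\<in>S. co h * h w) = (\<lambda>i r s. \<Sum>p\<in>F. (\<Sum>h\<in>S. co h * h p) * Theta_path N T p i r s)"
    by (rule Theta_lin_finite[OF F sub])
  also have "\<dots> = (\<lambda>i r s. \<Sum>h\<in>S. co h * (\<Sum>p\<in>F. h p * Theta_path N T p i r s))"
    by (simp add: sum_distrib_right sum_distrib_left sum.swap[of _ F S] mult.assoc)
  also have "\<dots> = (\<lambda>i r s. \<Sum>h\<in>S. co h * Theta_lin N T h i r s)"
  proof -
    have "Theta_lin N T h = (\<lambda>i r s. \<Sum>p\<in>F. h p * Theta_path N T p i r s)" if "h \<in> S" for h
      using that F by (intro Theta_lin_finite) (auto simp: F_def)
    then show ?thesis by (intro ext sum.cong) auto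
  qed
  finally show ?thesis .
qed

lemma pi_eq_cases:
  assumes N: "N > 0" and e: "pi N u v = pi N u' v'"
  shows "((u = u' \<or> u + int N \<le> u' \<or> u' + int N \<le> u) \<and> (v = v' \<or> v + int N \<le> v' \<or> v' + int N \<le> v)) \<or>
         ((u = v' \<or> u + int N \<le> v' \<or> v' + int N \<le> u) \<and> (v = u' \<or> v + int N \<le> u' \<or> u' + int N \<le> v))"
proof -
  have NN: "int N > 0" using N by simp
  from e[unfolded pi_eq[OF N]] show ?thesis using modeq_cases[OF _ NN] by blast
qed

context tri begin

lemma mesh_geo:
  assumes s: "strip N x y" and i1: "i \<in> supp N T (pi N x y)" and i2: "i \<in> supp N T (pi N (x+1) (y+1))"
  shows "\<exists>u v. x+1 < u \<and> u < y \<and> y+1 < v \<and> v < x + int N \<and> i = pi N u v \<and> Tpt u v"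
proof -
  have s2: "strip N (x+1) (y+1)" using s unfolding strip_def by auto
  obtain u v where uv: "x<u" "u<y" "y<v" "v<x+int N" "i = pi N u v" and iT: "i \<in> T"
    using i1 supp_pi[OF s] unfolding supp_l_def by blast
  obtain u' v' where uv': "x+1<u'" "u'<y+1" "y+1<v'" "v'<x+1+int N" "i = pi N u' v'"
    using i2 supp_pi[OF s2] unfolding supp_l_def by blast
  have "pi N u v = pi N u' v'" using uv(5) uv'(5) by simp
  from pi_eq_cases[OF Npos this] have "u = u' \<and> v = v'"
    using uv uv' by (elim disjE conjE; linarith)
  then have "x+1 < u \<and> u < y \<and> y+1 < v \<and> v < x + int N" using uv uv' by linarith
  moreover have "Tpt u v" using iT uv cr_strip[OF s uv(1-4)] unfolding Tpt_def by simp
  ultimately show ?thesis using uv by blast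
qed

lemma mesh_geo2:
  assumes s: "strip N x y" and i1: "i \<in> supp N T (pi N x y)" and i2: "i \<in> supp N T (pi N (x+1) (y+1))"
  shows "good x (y+1) \<and> good (x+1) y \<and> i \<in> supp N T (pi N x (y+1)) \<and> i \<in> supp N T (pi N (x+1) y)"
proof -
  obtain u v where uv: "x+1 < u" "u < y" "y+1 < v" "v < x + int N" "i = pi N u v" "Tpt u v"
    using mesh_geo[OF assms] by blast
  have s1: "strip N x (y+1)" "strip N (x+1) y" using s uv unfolding strip_def by auto
  have iT: "i \<in> T" using uv unfolding Tpt_def by simp
  have "pi N x (y+1) \<notin> T"
  proof
    assume "pi N x (y+1) \<in> T"
    then have "Tpt x (y+1)" using s1 unfolding Tpt_def by simp
    from noncross[OF this uv(6)] uv show False by linarith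
  qed
  moreover have "pi N (x+1) y \<notin> T"
  proof
    assume "pi N (x+1) y \<in> T"
    then have "Tpt (x+1) y" using s1 unfolding Tpt_def by simp
    from noncross[OF this uv(6)] uv show False by linarith
  qed
  moreover have "i \<in> supp N T (pi N x (y+1))" using supp_pi[OF s1(1)] iT uv unfolding supp_l_def
    by (smt (verit))
  moreover have "i \<in> supp N T (pi N (x+1) y)" using supp_pi[OF s1(2)] iT uv unfolding supp_l_def
    by (smt (verit))
  ultimately show ?thesis using s1 unfolding good_def by simp
qed

lemma Theta_gen:
  assumes g: "g \<in> mesh_gens N T al al'"
  shows "Theta_lin N T g = (\<lambda>i r s. 0)"
proof -
  obtain p q a b where G: "let \<beta> = {a, b}; \<gamma>1 = {a, (b + 1) mod N}; \<gamma>2 = {(a + 1) mod N, b};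
          \<delta> = {(a + 1) mod N, (b + 1) mod N};
          w1 = p @ [\<beta>, \<gamma>1, \<delta>] @ q; w2 = p @ [\<beta>, \<gamma>2, \<delta>] @ q
      in piv_path N T w1 \<and> hd w1 = al \<and> last w1 = al' \<and>
         (if pos_root N T \<gamma>2
          then g = (\<lambda>w. (if w = w1 then 1 else 0) - (if w = w2 then 1 else 0))
          else (border_edge N \<gamma>2 \<or> \<gamma>2 \<in> T) \<and> g = (\<lambda>w. if w = w1 then 1 else 0))"
    using g unfolding mesh_gens_def by blast
  define \<beta> where "\<beta> = {a, b}"
  define \<gamma>1 where "\<gamma>1 = {a, (b + 1) mod N}"
  define \<gamma>2 where "\<gamma>2 = {(a + 1) mod N, b}"
  define \<delta> where "\<delta> = {(a + 1) mod N, (b + 1) mod N}"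
  define w1 where "w1 = p @ [\<beta>, \<gamma>1, \<delta>] @ q"
  define w2 where "w2 = p @ [\<beta>, \<gamma>2, \<delta>] @ q"
  have G': "piv_path N T w1"
     "(if pos_root N T \<gamma>2
          then g = (\<lambda>w. (if w = w1 then 1 else 0) - (if w = w2 then 1 else 0))
          else (border_edge N \<gamma>2 \<or> \<gamma>2 \<in> T) \<and> g = (\<lambda>w. if w = w1 then 1 else 0))"
    using G unfolding Let_def \<beta>_def \<gamma>1_def \<gamma>2_def \<delta>_def w1_def w2_def by auto
  have "pos_root N T \<beta>" using G'(1) unfolding piv_path_def w1_def by auto
  then have "diagonal N \<beta>" unfolding pos_root_def by simp
  then obtain x y where xy: "strip N x y" "\<beta> = pi N x y" using diag_lift[OF Npos] by blast
  have ab: "(x mod int N = int a \<and> y mod int N = int b) \<or> (x mod int N = int b \<and> y mod int N = int a)"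
    using pi_mem_int[OF Npos] xy(2) unfolding \<beta>_def by metis
  have na: "nat (x mod int N) = a \<and> nat (y mod int N) = b \<or> nat (x mod int N) = b \<and> nat (y mod int N) = a"
    using ab by auto
  have m1: "nat ((x+1) mod int N) = (nat (x mod int N) + 1) mod N" "nat ((y+1) mod int N) = (nat (y mod int N) + 1) mod N"
    using mod_plus1_nat[OF Npos] by auto
  have dl: "\<delta> = pi N (x+1) (y+1)" using na m1 unfolding \<delta>_def pi_def by (auto simp: insert_commute)
  have gg: "(\<gamma>1 = pi N x (y+1) \<and> \<gamma>2 = pi N (x+1) y) \<or> (\<gamma>1 = pi N (x+1) y \<and> \<gamma>2 = pi N x (y+1))"
    using na m1 unfolding \<gamma>1_def \<gamma>2_def pi_def by (auto simp: insert_commute)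
  have key: "i \<in> supp N T \<beta> \<Longrightarrow> i \<in> supp N T \<delta> \<Longrightarrow>
      i \<in> supp N T \<gamma>1 \<and> i \<in> supp N T \<gamma>2 \<and> pos_root N T \<gamma>2" for i
    using mesh_geo2[OF xy(1), of i] xy(2) dl gg good_pos by auto
  have ne: "w1 \<noteq> []" "w2 \<noteq> []" unfolding w1_def w2_def by auto
  show ?thesis
  proof (cases "pos_root N T \<gamma>2")
    case True
    then have gd: "g = (\<lambda>w. (if w = w1 then 1 else 0) - (if w = w2 then 1 else 0))" using G'(2) by simp
    have same: "Theta_path N T w1 = Theta_path N T w2"
    proof (intro ext)
      fix i r c
      have "(\<forall>\<beta>'\<in>set w1. i \<in> supp N T \<beta>') \<longleftrightarrow> (\<forall>\<beta>'\<in>set w2. i \<in> supp N T \<beta>')"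
        using key[of i] unfolding w1_def w2_def by auto
      then show "Theta_path N T w1 i r c = Theta_path N T w2 i r c"
        using Theta_path_formula[OF ne(1)] Theta_path_formula[OF ne(2)] by simp
    qed
    have "Theta_lin N T g = (\<lambda>i r s. \<Sum>p\<in>{w1,w2}. g p * Theta_path N T p i r s)"
      by (rule Theta_lin_finite) (auto simp: gd split: if_splits)
    also have "\<dots> = (\<lambda>i r s. 0)"
      using same by (cases "w1 = w2") (auto simp: gd)
    finally show ?thesis .
  next
    case False
    then have gd: "g = (\<lambda>w. if w = w1 then 1 else 0)" using G'(2) by simp
    have z: "Theta_path N T w1 i r c = 0" for i r c
    proof -
      have "\<not> (\<forall>\<beta>'\<in>set w1. i \<in> supp N T \<beta>')"
        using key[of i] False unfolding w1_def by auto
      then show ?thesis using Theta_path_formula[OF ne(1)] by simp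
    qed
    have "Theta_lin N T g = (\<lambda>i r s. \<Sum>p\<in>{w1}. g p * Theta_path N T p i r s)"
      by (rule Theta_lin_finite) (auto simp: gd split: if_splits)
    also have "\<dots> = (\<lambda>i r s. 0)" using z by (auto simp: gd)
    finally show ?thesis .
  qed
qed

lemma Theta_span:
  assumes "g \<in> mesh_span N T al al'"
  shows "Theta_lin N T g = (\<lambda>i r s. 0)"
proof -
  obtain S co where S: "finite S" "S \<subseteq> mesh_gens N T al al'" "g = (\<lambda>w. \<Sum>h\<in>S. co h * h w)"
    using assms unfolding mesh_span_def by blast
  have fin: "\<forall>h\<in>S. finite {p. h p \<noteq> 0}"
  proof
    fix h assume "h \<in> S"
    then have "h \<in> mesh_gens N T al al'" using S by auto
    then show "finite {p. h p \<noteq> 0}" unfolding mesh_gens_def Let_def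
      by (auto split: if_splits intro: finite_subset[of _ "{_, _}"])
  qed
  show ?thesis unfolding S(3) Theta_lin_span_sum[OF S(1) fin]
    using Theta_gen S(2) by (auto intro!: ext sum.neutral)
qed

end

lemma mesh_gens_I:
  assumes "piv_path N T (p @ [{a,b}, {a, (b + 1) mod N}, {(a + 1) mod N, (b + 1) mod N}] @ q)"
    "hd (p @ [{a,b}, {a, (b + 1) mod N}, {(a + 1) mod N, (b + 1) mod N}] @ q) = al"
    "last (p @ [{a,b}, {a, (b + 1) mod N}, {(a + 1) mod N, (b + 1) mod N}] @ q) = al'"
    "if pos_root N T {(a + 1) mod N, b}
          then g = (\<lambda>w. (if w = p @ [{a,b}, {a, (b + 1) mod N}, {(a + 1) mod N, (b + 1) mod N}] @ q then 1 else 0)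
                 - (if w = p @ [{a,b}, {(a + 1) mod N, b}, {(a + 1) mod N, (b + 1) mod N}] @ q then 1 else 0))
          else (border_edge N {(a + 1) mod N, b} \<or> {(a + 1) mod N, b} \<in> T) \<and>
               g = (\<lambda>w. if w = p @ [{a,b}, {a, (b + 1) mod N}, {(a + 1) mod N, (b + 1) mod N}] @ q then 1 else 0)"
  shows "g \<in> mesh_gens N T al al'"
  using assms unfolding mesh_gens_def Let_def by blast

context tri begin

lemma gen_intro:
  assumes s: "strip N x y"
    and w1: "w1 = p @ [pi N x y, g1, pi N (x+1) (y+1)] @ q"
    and w2: "w2 = p @ [pi N x y, g2, pi N (x+1) (y+1)] @ q"
    and pv: "piv_path N T w1" "hd w1 = al" "last w1 = al'"
    and gg: "(g1 = pi N x (y+1) \<and> g2 = pi N (x+1) y) \<or> (g1 = pi N (x+1) y \<and> g2 = pi N x (y+1))"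
  shows "(pos_root N T g2 \<longrightarrow> (\<lambda>w. ee w1 w - ee w2 w) \<in> mesh_gens N T al al') \<and>
         (\<not> pos_root N T g2 \<longrightarrow> (border_edge N g2 \<or> g2 \<in> T) \<longrightarrow> ee w1 \<in> mesh_gens N T al al')"
proof -
  have m1: "nat ((x+1) mod int N) = (nat (x mod int N) + 1) mod N" "nat ((y+1) mod int N) = (nat (y mod int N) + 1) mod N"
    using mod_plus1_nat[OF Npos] by auto
  have main: "(pos_root N T g2 \<longrightarrow> (\<lambda>w. ee w1 w - ee w2 w) \<in> mesh_gens N T al al') \<and>
         (\<not> pos_root N T g2 \<longrightarrow> (border_edge N g2 \<or> g2 \<in> T) \<longrightarrow> ee w1 \<in> mesh_gens N T al al')"
    if ab: "{a, b} = pi N x y" "{a, (b + 1) mod N} = g1" "{(a + 1) mod N, b} = g2"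
       "{(a + 1) mod N, (b + 1) mod N} = pi N (x+1) (y+1)" for a b
  proof (intro conjI impI)
    assume pg: "pos_root N T g2"
    show "(\<lambda>w. ee w1 w - ee w2 w) \<in> mesh_gens N T al al'"
      by (rule mesh_gens_I[where p=p and q=q and a=a and b=b]) (use pv w1 w2 ab pg in \<open>simp_all add: ee_def\<close>)
  next
    assume pg: "\<not> pos_root N T g2" "border_edge N g2 \<or> g2 \<in> T"
    show "ee w1 \<in> mesh_gens N T al al'"
      by (rule mesh_gens_I[where p=p and q=q and a=a and b=b]) (use pv w1 w2 ab pg in \<open>simp_all add: ee_def\<close>)
  qed
  from gg show ?thesis
  proof
    assume h: "g1 = pi N x (y+1) \<and> g2 = pi N (x+1) y"
    show ?thesis
      by (rule main[of "nat (x mod int N)" "nat (y mod int N)"]) (use h m1 in \<open>simp_all add: pi_def\<close>)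
  next
    assume h: "g1 = pi N (x+1) y \<and> g2 = pi N x (y+1)"
    show ?thesis
      by (rule main[of "nat (y mod int N)" "nat (x mod int N)"]) (use h m1 in \<open>simp_all add: pi_def insert_commute\<close>)
  qed
qed

lemma img_split:
  "img P0 (u @ [b, c] @ v) = map pp (butlast (walk P0 u)) @
     [pp (endp P0 u), pp (step (endp P0 u) b), pp (step (step (endp P0 u) b) c)] @
     map pp (tl (walk (step (step (endp P0 u) b) c) v))"
proof -
  have "walk (step (step (endp P0 u) b) c) v = step (step (endp P0 u) b) c # tl (walk (step (step (endp P0 u) b) c) v)"
    by (metis hd_walk walk_ne list.collapse)
  then have e: "map pp (walk (step (step (endp P0 u) b) c) v) = pp (step (step (endp P0 u) b) c) # map pp (tl (walk (step (step (endp P0 u) b) c) v))"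
    by (metis list.simps(9))
  show ?thesis unfolding img_def walk_append by (simp add: e)
qed

lemma hd_img: "hd (img P w) = pp P" unfolding img_def by (simp add: hd_map)
lemma last_img: "last (img P w) = pp (endp P w)" unfolding img_def by (simp add: last_map last_walk)

lemma endp_swap: "endp P0 (u @ [b, c] @ v) = endp P0 (u @ [c, b] @ v)"
  unfolding endp_formula by simp

lemma step_TF: "step (step P True) False = (fst P + 1, snd P + 1)" "step (step P False) True = (fst P + 1, snd P + 1)"
  "step P True = (fst P + 1, snd P)" "step P False = (fst P, snd P + 1)"
  by (auto simp: step_def)

lemma bad_class:
  assumes s: "strip N x y" and d: "(x', y') = (x+1, y) \<or> (x', y') = (x, y+1)" and ng: "\<not> good x' y'"
  shows "\<not> pos_root N T (pi N x' y') \<and> (border_edge N (pi N x' y') \<or> pi N x' y' \<in> T)"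
proof (cases "strip N x' y'")
  case True
  then have "pi N x' y' \<in> T" using ng unfolding good_def by simp
  then show ?thesis unfolding pos_root_def by simp
next
  case False
  have "y' = x' + 1 \<or> y' = x' + int N - 1" using s d False unfolding strip_def by auto
  then have "border_edge N (pi N x' y')" using border_1[OF Npos] border_2[OF Npos] by blast
  then show ?thesis unfolding pos_root_def diagonal_def by simp
qed

lemma flip:
  assumes ok: "valid P0 (u @ [b, \<not>b] @ v)" "pp (endp P0 (u @ [b, \<not>b] @ v)) = al'" "pp P0 = al"
  defines "P \<equiv> endp P0 u"
  defines "alt \<equiv> (if b then (fst P, snd P + 1) else (fst P + 1, snd P))"
  shows "good (fst alt) (snd alt) \<Longrightarrow>
           (\<lambda>w. ee (img P0 (u @ [b, \<not>b] @ v)) w - ee (img P0 (u @ [\<not>b, b] @ v)) w) \<in> mesh_span N T al al'"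
    and "\<not> good (fst alt) (snd alt) \<Longrightarrow> ee (img P0 (u @ [b, \<not>b] @ v)) \<in> mesh_span N T al al'"
proof -
  obtain x y where P: "P = (x,y)" by (cases P)
  have vP: "good x y" using ok(1) unfolding valid_append P_def[symmetric] P
    by (auto simp: valid_Cons)
  then have s: "strip N x y" unfolding good_def by simp
  define pre where "pre = map pp (butlast (walk P0 u))"
  define post where "post = map pp (tl (walk (x+1, y+1) v))"
  have W1: "img P0 (u @ [b, \<not>b] @ v) = pre @ [pi N x y, pp (step (x,y) b), pi N (x+1) (y+1)] @ post"
    unfolding img_split pre_def post_def P_def[symmetric] P by (cases b) (simp_all add: step_TF pp_def)
  have W2: "img P0 (u @ [\<not>b, b] @ v) = pre @ [pi N x y, pp alt, pi N (x+1) (y+1)] @ post"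
    unfolding img_split pre_def post_def P_def[symmetric] P alt_def by (cases b) (simp_all add: step_TF pp_def)
  have pv: "piv_path N T (img P0 (u @ [b, \<not>b] @ v))" "hd (img P0 (u @ [b, \<not>b] @ v)) = al"
     "last (img P0 (u @ [b, \<not>b] @ v)) = al'"
    using valid_piv[OF ok(1)] hd_img last_img ok by auto
  have gg: "(pp (step (x,y) b) = pi N x (y+1) \<and> pp alt = pi N (x+1) y) \<or>
            (pp (step (x,y) b) = pi N (x+1) y \<and> pp alt = pi N x (y+1))"
    unfolding alt_def P by (cases b) (simp_all add: step_def pp_def)
  note G = gen_intro[OF s W1 W2 pv gg]
  show "good (fst alt) (snd alt) \<Longrightarrow>
           (\<lambda>w. ee (img P0 (u @ [b, \<not>b] @ v)) w - ee (img P0 (u @ [\<not>b, b] @ v)) w) \<in> mesh_span N T al al'"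
    using G good_pos span_gen unfolding pp_def by (metis prod.collapse)
  assume ng: "\<not> good (fst alt) (snd alt)"
  have d: "(fst alt, snd alt) = (x+1, y) \<or> (fst alt, snd alt) = (x, y+1)" unfolding alt_def P by auto
  have "\<not> pos_root N T (pp alt) \<and> (border_edge N (pp alt) \<or> pp alt \<in> T)"
    using bad_class[OF s d ng] unfolding pp_def .
  then show "ee (img P0 (u @ [b, \<not>b] @ v)) \<in> mesh_span N T al al'" using G span_gen by blast
qed

end

locale pctx = tri +
  fixes P0 :: "int \<times> int" and al al' :: "nat set"
  assumes P0al: "pp P0 = al"
begin

definition E :: "bool list \<Rightarrow> nat set list \<Rightarrow> complex" where "E w = ee (img P0 w)"
definition inS :: "(nat set list \<Rightarrow> complex) \<Rightarrow> bool" where "inS f \<longleftrightarrow> f \<in> mesh_span N T al al'"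
definition eqv :: "bool list \<Rightarrow> bool list \<Rightarrow> bool" where "eqv w1 w2 \<longleftrightarrow> inS (\<lambda>z. E w1 z - E w2 z)"
definition ok :: "bool list \<Rightarrow> bool" where "ok w \<longleftrightarrow> valid P0 w \<and> pp (endp P0 w) = al'"
definition boxgood :: "int \<times> int \<Rightarrow> int \<times> int \<Rightarrow> bool" where
  "boxgood P Q \<longleftrightarrow> (\<forall>X Y. fst P \<le> X \<and> X \<le> fst Q \<and> snd P \<le> Y \<and> Y \<le> snd Q \<longrightarrow> good X Y)"
definition can :: "nat \<Rightarrow> nat \<Rightarrow> bool list" where "can a b = replicate a True @ replicate b False"
definition cT :: "bool list \<Rightarrow> nat" where "cT w = length (filter id w)"
definition cF :: "bool list \<Rightarrow> nat" where "cF w = length (filter Not w)"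

lemma eqv_refl: "eqv w w"
  unfolding eqv_def inS_def using span_zero by simp

lemma eqv_sym: "eqv a b \<Longrightarrow> eqv b a"
  unfolding eqv_def inS_def using span_scale[of "\<lambda>z. E a z - E b z" N T al al' "-1"] by simp

lemma eqv_trans: "eqv a b \<Longrightarrow> eqv b c \<Longrightarrow> eqv a c"
  unfolding eqv_def inS_def using span_add[of "\<lambda>z. E a z - E b z" N T al al' "\<lambda>z. E b z - E c z"] by simp

lemma eqv_inS: "eqv a b \<Longrightarrow> inS (E b) \<Longrightarrow> inS (E a)"
  unfolding eqv_def inS_def using span_add[of "\<lambda>z. E a z - E b z" N T al al' "E b"] by simp

lemma cT_simps[simp]: "cT [] = 0" "cT (True # w) = Suc (cT w)" "cT (False # w) = cT w" "cT (u @ w) = cT u + cT w"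
  unfolding cT_def by auto
lemma cF_simps[simp]: "cF [] = 0" "cF (True # w) = cF w" "cF (False # w) = Suc (cF w)" "cF (u @ w) = cF u + cF w"
  unfolding cF_def by auto
lemma can_counts[simp]: "cT (can a b) = a" "cF (can a b) = b"
  unfolding can_def cT_def cF_def by (induction a) (auto simp: filter_replicate)

lemma endp_counts: "endp P w = (fst P + int (cT w), snd P + int (cF w))"
  unfolding cT_def cF_def by (rule endp_formula)

lemma endp_same: "cT w1 = cT w2 \<Longrightarrow> cF w1 = cF w2 \<Longrightarrow> endp P w1 = endp P w2"
  unfolding endp_counts by simp

lemma valid_box: "boxgood P (endp P w) \<Longrightarrow> valid P w"
  unfolding valid_def boxgood_def using walk_box by blast

lemma ok_split: "ok (u @ w @ v) \<longleftrightarrow> valid P0 u \<and> valid (endp P0 u) w \<and> valid (endp P0 (u @ w)) v \<and>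
    pp (endp P0 (u @ w @ v)) = al'"
  unfolding ok_def valid_append endp_append by auto

lemma ok_replace:
  assumes "ok (u @ w @ v)" "cT w' = cT w" "cF w' = cF w" "valid (endp P0 u) w'"
  shows "ok (u @ w' @ v)"
proof -
  have "endp P0 (u @ w') = endp P0 (u @ w)" unfolding endp_append using assms(2,3) by (intro endp_same) auto
  moreover have "endp P0 (u @ w' @ v) = endp P0 (u @ w @ v)" unfolding endp_append using assms(2,3)
    by (metis endp_append endp_same)
  ultimately show ?thesis using assms unfolding ok_split by simp
qed

lemma boxgood_sub: "boxgood P Q \<Longrightarrow> fst P \<le> fst P' \<Longrightarrow> snd P \<le> snd P' \<Longrightarrow> boxgood P' Q"
  unfolding boxgood_def by auto

lemma len_counts: "length w = cT w + cF w"
  unfolding cT_def cF_def by (induction w) auto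

lemma len_can[simp]: "length (can a b) = a + b" unfolding can_def by simp

lemma can_Suc_T: "can (Suc a) b = True # can a b" unfolding can_def by simp
lemma can_0: "can 0 b = replicate b False" unfolding can_def by simp

lemma flipE:
  assumes "ok (u @ [b, \<not>b] @ v)"
  shows "good (fst (if b then (fst (endp P0 u), snd (endp P0 u) + 1) else (fst (endp P0 u) + 1, snd (endp P0 u))))
               (snd (if b then (fst (endp P0 u), snd (endp P0 u) + 1) else (fst (endp P0 u) + 1, snd (endp P0 u)))) \<Longrightarrow>
         eqv (u @ [b, \<not>b] @ v) (u @ [\<not>b, b] @ v)"
    and "\<not> good (fst (if b then (fst (endp P0 u), snd (endp P0 u) + 1) else (fst (endp P0 u) + 1, snd (endp P0 u))))
               (snd (if b then (fst (endp P0 u), snd (endp P0 u) + 1) else (fst (endp P0 u) + 1, snd (endp P0 u)))) \<Longrightarrow>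
         inS (E (u @ [b, \<not>b] @ v))"
  using flip[of P0 u b v al' al] assms P0al unfolding ok_def eqv_def inS_def E_def by auto

lemma ok_box_replace:
  assumes "ok (u @ w @ v)" "boxgood (endp P0 u) (endp P0 (u @ w))" "cT w' = cT w" "cF w' = cF w"
  shows "ok (u @ w' @ v)"
proof -
  have "endp (endp P0 u) w' = endp (endp P0 u) w" using assms(3,4) by (rule endp_same)
  then have "valid (endp P0 u) w'" using assms(2) valid_box unfolding endp_append by metis
  then show ?thesis using ok_replace assms by blast
qed

lemma boxA:
  "ok (u @ w @ v) \<Longrightarrow> boxgood (endp P0 u) (endp P0 (u @ w)) \<Longrightarrow> eqv (u @ w @ v) (u @ can (cT w) (cF w) @ v)"
proof (induction "length w" arbitrary: u w rule: less_induct)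
  case less
  obtain x y where P: "endp P0 u = (x, y)" by (cases "endp P0 u")
  have Q: "endp P0 (u @ w) = (x + int (cT w), y + int (cF w))"
  proof -
    have "endp P0 (u @ w) = endp (x, y) w" using P by (simp add: endp_append)
    then show ?thesis using endp_counts[of "(x,y)" w] by simp
  qed
  have sub: "boxgood (endp P0 (u @ [c])) (endp P0 (u @ w))" for c
    using less.prems(2) by (rule boxgood_sub) (auto simp: endp_append step_def)
  show ?case
  proof (cases w)
    case Nil then show ?thesis using eqv_refl by (simp add: can_def)
  next
    case (Cons b w')
    have ew: "endp P0 ((u @ [b]) @ w') = endp P0 (u @ w)" using Cons by simp
    have ok1: "ok ((u @ [b]) @ w' @ v)" using less.prems(1) Cons by simp
    have e1: "eqv ((u @ [b]) @ w' @ v) ((u @ [b]) @ can (cT w') (cF w') @ v)"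
      using less.hyps[of w' "u @ [b]"] ok1 sub[of b] ew Cons by simp
    show ?thesis
    proof (cases b)
      case True
      then show ?thesis using e1 Cons by (simp add: can_Suc_T)
    next
      case False
      show ?thesis
      proof (cases "cT w'")
        case 0
        then show ?thesis using e1 Cons False by (simp add: can_def)
      next
        case (Suc a)
        define r where "r = can a (cF w')"
        have e1': "eqv (u @ False # w' @ v) (u @ [False, True] @ r @ v)"
          using e1 False Suc unfolding r_def by (simp add: can_Suc_T)
        have ok2: "ok (u @ [False, True] @ r @ v)"
          using ok_box_replace[OF less.prems, of "[False, True] @ r"] Cons False Suc unfolding r_def by simp
        have galt: "good (x + 1) y"
          using less.prems(2) Q Cons False Suc unfolding boxgood_def P by auto
        have e2: "eqv (u @ [False, True] @ r @ v) (u @ [True, False] @ r @ v)"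
          using flipE(1)[of u False "r @ v"] ok2 galt P by simp
        have ok3: "ok ((u @ [True]) @ (False # r) @ v)"
          using ok_box_replace[OF less.prems, of "[True, False] @ r"] Cons False Suc unfolding r_def by simp
        have ew3: "endp P0 ((u @ [True]) @ (False # r)) = endp P0 (u @ w)"
          unfolding endp_append[symmetric] using Cons False Suc unfolding r_def
          by (intro endp_same) auto
        have e3: "eqv ((u @ [True]) @ (False # r) @ v) ((u @ [True]) @ can (cT (False # r)) (cF (False # r)) @ v)"
          using less.hyps[of "False # r" "u @ [True]"] ok3 sub[of True] ew3 Cons Suc len_counts[of w'] unfolding r_def by simp
        have fin: "u @ can (cT w) (cF w) @ v = (u @ [True]) @ can (cT (False # r)) (cF (False # r)) @ v"
          using Cons False Suc unfolding r_def by (simp add: can_Suc_T)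
        have "eqv (u @ w @ v) (u @ [True, False] @ r @ v)"
          using eqv_trans[OF e1' e2] Cons False by simp
        then show ?thesis using eqv_trans[OF _ e3] fin by simp
      qed
    qed
  qed
qed

lemma box_eqv:
  assumes "ok (u @ w1 @ v)" "boxgood (endp P0 u) (endp P0 (u @ w1))" "cT w2 = cT w1" "cF w2 = cF w1"
  shows "eqv (u @ w1 @ v) (u @ w2 @ v)"
proof -
  have e: "endp P0 (u @ w2) = endp P0 (u @ w1)" unfolding endp_append using assms(3,4) by (intro endp_same) auto
  have ok2: "ok (u @ w2 @ v)" using ok_box_replace[OF assms] .
  have "eqv (u @ w1 @ v) (u @ can (cT w1) (cF w1) @ v)" using boxA assms(1,2) .
  moreover have "eqv (u @ w2 @ v) (u @ can (cT w1) (cF w1) @ v)" using boxA[OF ok2] assms e by simp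
  ultimately show ?thesis using eqv_trans eqv_sym by blast
qed

lemma ok_good_start: "ok (u @ w @ v) \<Longrightarrow> good (fst (endp P0 u)) (snd (endp P0 u))"
  unfolding ok_split using valid_start by blast

lemma boxB:
  "ok (u @ w @ v) \<Longrightarrow> fst (endp P0 u) \<le> X \<Longrightarrow> X \<le> fst (endp P0 (u @ w)) \<Longrightarrow>
   snd (endp P0 u) \<le> Y \<Longrightarrow> Y \<le> snd (endp P0 (u @ w)) \<Longrightarrow> \<not> good X Y \<Longrightarrow> inS (E (u @ w @ v))"
proof (induction "length w" arbitrary: u w X Y rule: less_induct)
  case less
  obtain x y where P: "endp P0 u = (x, y)" by (cases "endp P0 u")
  have Q: "endp P0 (u @ w) = (x + int (cT w), y + int (cF w))"
  proof -
    have "endp P0 (u @ w) = endp (x, y) w" using P by (simp add: endp_append)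
    then show ?thesis using endp_counts[of "(x,y)" w] by simp
  qed
  have gP: "good x y" using ok_good_start[OF less.prems(1)] P by simp
  show ?case
  proof (cases w)
    case Nil then show ?thesis using less.prems gP P by simp
  next
    case (Cons b w')
    have ew: "endp P0 ((u @ [b]) @ w') = endp P0 (u @ w)" using Cons by simp
    have ok1: "ok ((u @ [b]) @ w' @ v)" using less.prems(1) Cons by simp
    have P1: "endp P0 (u @ [b]) = step (x,y) b" using P by (simp add: endp_append)
    show ?thesis
    proof (cases "boxgood (endp P0 (u @ [b])) (endp P0 (u @ w))")
      case False
      then obtain X' Y' where b: "fst (endp P0 (u @ [b])) \<le> X'" "X' \<le> fst (endp P0 (u @ w))"
        "snd (endp P0 (u @ [b])) \<le> Y'" "Y' \<le> snd (endp P0 (u @ w))" "\<not> good X' Y'"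
        unfolding boxgood_def by blast
      have "inS (E ((u @ [b]) @ w' @ v))"
        using less.hyps[of w' "u @ [b]" X' Y'] ok1 b ew Cons by simp
      then show ?thesis using Cons by simp
    next
      case True
      note bg = True
      show ?thesis
      proof (cases b)
        case True
        have P1': "endp P0 (u @ [True]) = (x + 1, y)" using P1 True by (simp add: step_def)
        have XY: "X = x" "Y > y" using less.prems(2-6) bg P1' True gP P unfolding boxgood_def
          by (smt (verit) fst_conv snd_conv)+
        have cF1: "cF w' \<ge> 1" using XY less.prems(5) Q Cons True by simp
        then obtain b' where b': "cF w' = Suc b'" by (cases "cF w'") auto
        define r where "r = can (cT w') b'"
        have bg1: "boxgood (endp P0 (u @ [True])) (endp P0 ((u @ [True]) @ w'))" using bg ew True by simp
        have e1: "eqv ((u @ [True]) @ w' @ v) ((u @ [True]) @ (False # r) @ v)"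
          using box_eqv[OF _ bg1, of v "False # r"] ok1 True b' unfolding r_def by simp
        have ok2: "ok (u @ [True, False] @ r @ v)"
          using ok_box_replace[OF _ bg1, of v "False # r"] ok1 True b' unfolding r_def by simp
        show ?thesis
        proof (cases "good x (y + 1)")
          case False
          have "inS (E (u @ [True, False] @ r @ v))"
            using flipE(2)[of u True "r @ v"] ok2 False P by simp
          then show ?thesis using eqv_inS e1 Cons \<open>b\<close> by simp
        next
          case True
          have e2: "eqv (u @ [True, False] @ r @ v) (u @ [False, True] @ r @ v)"
            using flipE(1)[of u True "r @ v"] ok2 True P by simp
          have Q2: "endp P0 ((u @ [False]) @ (True # r)) = endp P0 (u @ w)"
            unfolding endp_append[symmetric] using Cons \<open>b\<close> b' unfolding r_def by (intro endp_same) auto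
          have vr: "valid (x + 1, y + 1) r"
          proof (rule valid_box)
            have "endp (x+1, y+1) r = endp P0 (u @ w)"
              using Q b' Cons \<open>b\<close> unfolding r_def endp_counts[of "(x+1,y+1)"] by simp
            then show "boxgood (x + 1, y + 1) (endp (x + 1, y + 1) r)"
              using boxgood_sub[OF bg] P1' \<open>b\<close> by simp
          qed
          have ok3: "ok ((u @ [False]) @ (True # r) @ v)"
          proof -
            have "valid (x, y) ([False, True] @ r)" using gP True vr by (simp add: valid_Cons step_def)
            then show ?thesis using ok_replace[of u "[True, False] @ r" v "[False, True] @ r"] ok2 P by simp
          qed
          have P3: "endp P0 (u @ [False]) = (x, y + 1)" using P by (simp add: endp_append step_def)
          have "inS (E ((u @ [False]) @ (True # r) @ v))"
            using less.hyps[of "True # r" "u @ [False]" X Y] ok3 Q2 P3 XY less.prems(3,5,6) Cons b' len_counts[of w']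
            unfolding r_def by simp
          then have "inS (E (u @ [True, False] @ r @ v))" using eqv_inS e2 by simp
          then show ?thesis using eqv_inS e1 Cons \<open>b\<close> by simp
        qed
      next
        case False
        have P1': "endp P0 (u @ [False]) = (x, y + 1)" using P1 False by (simp add: step_def)
        have XY: "Y = y" "X > x" using less.prems(2-6) bg P1' False gP P unfolding boxgood_def
          by (smt (verit) fst_conv snd_conv)+
        have cT1: "cT w' \<ge> 1" using XY less.prems(3) Q Cons False by simp
        then obtain a' where a': "cT w' = Suc a'" by (cases "cT w'") auto
        define r where "r = can a' (cF w')"
        have bg1: "boxgood (endp P0 (u @ [False])) (endp P0 ((u @ [False]) @ w'))" using bg ew False by simp
        have e1: "eqv ((u @ [False]) @ w' @ v) ((u @ [False]) @ (True # r) @ v)"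
          using box_eqv[OF _ bg1, of v "True # r"] ok1 False a' unfolding r_def by simp
        have ok2: "ok (u @ [False, True] @ r @ v)"
          using ok_box_replace[OF _ bg1, of v "True # r"] ok1 False a' unfolding r_def by simp
        show ?thesis
        proof (cases "good (x + 1) y")
          case False
          have "inS (E (u @ [False, True] @ r @ v))"
            using flipE(2)[of u False "r @ v"] ok2 False P by simp
          then show ?thesis using eqv_inS e1 Cons \<open>\<not> b\<close> by simp
        next
          case True
          have e2: "eqv (u @ [False, True] @ r @ v) (u @ [True, False] @ r @ v)"
            using flipE(1)[of u False "r @ v"] ok2 True P by simp
          have Q2: "endp P0 ((u @ [True]) @ (False # r)) = endp P0 (u @ w)"
            unfolding endp_append[symmetric] using Cons \<open>\<not> b\<close> a' unfolding r_def by (intro endp_same) auto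
          have vr: "valid (x + 1, y + 1) r"
          proof (rule valid_box)
            have "endp (x+1, y+1) r = endp P0 (u @ w)"
              using Q a' Cons \<open>\<not> b\<close> unfolding r_def endp_counts[of "(x+1,y+1)"] by simp
            then show "boxgood (x + 1, y + 1) (endp (x + 1, y + 1) r)"
              using boxgood_sub[OF bg] P1' \<open>\<not> b\<close> by simp
          qed
          have ok3: "ok ((u @ [True]) @ (False # r) @ v)"
          proof -
            have "valid (x, y) ([True, False] @ r)" using gP True vr by (simp add: valid_Cons step_def)
            then show ?thesis using ok_replace[of u "[False, True] @ r" v "[True, False] @ r"] ok2 P by simp
          qed
          have P3: "endp P0 (u @ [True]) = (x + 1, y)" using P by (simp add: endp_append step_def)
          have "inS (E ((u @ [True]) @ (False # r) @ v))"
            using less.hyps[of "False # r" "u @ [True]" X Y] ok3 Q2 P3 XY less.prems(3,5,6) Cons a' len_counts[of w']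
            unfolding r_def by simp
          then have "inS (E (u @ [False, True] @ r @ v))" using eqv_inS e2 by simp
          then show ?thesis using eqv_inS e1 Cons \<open>\<not> b\<close> by simp
        qed
      qed
    qed
  qed
qed

end

definition prec :: "int \<times> int \<Rightarrow> int \<times> int \<Rightarrow> bool" where
  "prec a b \<longleftrightarrow> fst a < fst b \<or> (fst a = fst b \<and> snd b < snd a)"

definition is_first :: "(int \<times> int) set \<Rightarrow> int \<times> int \<Rightarrow> bool" where
  "is_first S a \<longleftrightarrow> a \<in> S \<and> (\<forall>c\<in>S. c = a \<or> prec a c)"

definition is_last :: "(int \<times> int) set \<Rightarrow> int \<times> int \<Rightarrow> bool" where
  "is_last S a \<longleftrightarrow> a \<in> S \<and> (\<forall>c\<in>S. c = a \<or> prec c a)"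

lemma prec_total: "a \<noteq> b \<Longrightarrow> prec a b \<or> prec b a"
  unfolding prec_def by (cases a, cases b) auto

lemma prec_trans: "prec a b \<Longrightarrow> prec b c \<Longrightarrow> prec a c"
  unfolding prec_def by auto

lemma prec_irrefl: "\<not> prec a a" unfolding prec_def by auto

lemma first_exists: "finite S \<Longrightarrow> S \<noteq> {} \<Longrightarrow> \<exists>a. is_first S a"
proof (induction S rule: finite_ne_induct)
  case (singleton x) then show ?case unfolding is_first_def by auto
next
  case (insert c F)
  then obtain a where a: "is_first F a" by blast
  show ?case
  proof (cases "prec c a")
    case True
    then have "is_first (insert c F) c" using a prec_trans unfolding is_first_def by (auto intro: prec_trans)
    then show ?thesis by blast
  next
    case False
    have "c \<noteq> a" using insert a unfolding is_first_def by auto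
    then have "prec a c" using prec_total False by blast
    then have "is_first (insert c F) a" using a unfolding is_first_def by auto
    then show ?thesis by blast
  qed
qed

lemma last_exists: "finite S \<Longrightarrow> S \<noteq> {} \<Longrightarrow> \<exists>a. is_last S a"
proof (induction S rule: finite_ne_induct)
  case (singleton x) then show ?case unfolding is_last_def by auto
next
  case (insert c F)
  then obtain a where a: "is_last F a" by blast
  show ?case
  proof (cases "prec a c")
    case True
    then have "is_last (insert c F) c" using a prec_trans unfolding is_last_def by (auto intro: prec_trans)
    then show ?thesis by blast
  next
    case False
    have "c \<noteq> a" using insert a unfolding is_last_def by auto
    then have "prec c a" using prec_total False by blast
    then have "is_last (insert c F) a" using a unfolding is_last_def by auto
    then show ?thesis by blast
  qed
qed

lemma succ_exists:
  assumes "finite S" "c \<in> S" "prec a c"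
  shows "\<exists>b\<in>S. prec a b \<and> (\<forall>d\<in>S. \<not> (prec a d \<and> prec d b))"
proof -
  have "{d\<in>S. prec a d} \<noteq> {}" using assms by blast
  then obtain b where b: "is_first {d\<in>S. prec a d} b" using first_exists[of "{d\<in>S. prec a d}"] assms(1) by auto
  then show ?thesis unfolding is_first_def using prec_irrefl by (metis (mono_tags, lifting) mem_Collect_eq prec_trans)
qed

lemma pred_exists:
  assumes "finite S" "c \<in> S" "prec c a"
  shows "\<exists>b\<in>S. prec b a \<and> (\<forall>d\<in>S. \<not> (prec b d \<and> prec d a))"
proof -
  have "{d\<in>S. prec d a} \<noteq> {}" using assms by blast
  then obtain b where b: "is_last {d\<in>S. prec d a} b" using last_exists[of "{d\<in>S. prec d a}"] assms(1) by auto
  then show ?thesis unfolding is_last_def using prec_irrefl by (metis (mono_tags, lifting) mem_Collect_eq prec_trans)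
qed

context tri begin

definition TP :: "int \<Rightarrow> int \<Rightarrow> (int \<times> int) set" where
  "TP x y = {(u,v). x < u \<and> u < y \<and> y < v \<and> v < x + int N \<and> Tpt u v}"

definition Tb :: "int \<Rightarrow> int \<Rightarrow> bool" where
  "Tb X Y \<longleftrightarrow> pi N X Y \<in> T \<or> border_edge N (pi N X Y)"

lemma TP_finite: "finite (TP x y)"
proof -
  have "TP x y \<subseteq> {x<..<y} \<times> {y<..<x + int N}" unfolding TP_def by auto
  then show ?thesis by (rule finite_subset) auto
qed

lemma TP_ne: "good x y \<Longrightarrow> TP x y \<noteq> {}"
  using maxim unfolding TP_def by blast

lemma chain: "a \<in> TP x y \<Longrightarrow> b \<in> TP x y \<Longrightarrow> fst a < fst b \<Longrightarrow> snd b \<le> snd a"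
  unfolding TP_def using noncross[of "fst a" "snd a" "fst b" "snd b"] by force

lemma Tpt_shift: "Tpt c d \<Longrightarrow> Tpt (d - int N) c"
proof -
  assume h: "Tpt c d"
  have "pi N (d - int N) c = pi N c d" using pi_shift(1)[of N "d - int N" c] pi_shift(3) by simp
  moreover have "strip N (d - int N) c" using h unfolding Tpt_def strip_def by auto
  ultimately show ?thesis using h unfolding Tpt_def by simp
qed

lemma Tpt_strip: "Tpt c d \<Longrightarrow> strip N c d" unfolding Tpt_def by simp

lemma Tb_T: "Tpt a b \<Longrightarrow> Tb a b" unfolding Tb_def Tpt_def by simp

lemma stair_first:
  assumes g: "good x y" and f: "is_first (TP x y) (p, q)"
  shows "Tb x p \<and> Tb x q"
proof -
  have pq: "x < p" "p < y" "y < q" "q < x + int N" "Tpt p q" using f unfolding is_first_def TP_def by auto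
  have s: "strip N x y" using g unfolding good_def by simp
  have fm: "\<And>c d. (c, d) \<in> TP x y \<Longrightarrow> (c, d) = (p, q) \<or> prec (p, q) (c, d)"
    using f unfolding is_first_def by blast
  have 1: "Tb x p"
  proof (cases "p = x + 1")
    case True then show ?thesis using border_1[OF Npos] unfolding Tb_def by simp
  next
    case False
    then have sp: "strip N x p" using pq s unfolding strip_def by auto
    show ?thesis
    proof (rule ccontr)
      assume "\<not> Tb x p"
      then have "good x p" using sp unfolding Tb_def good_def by simp
      then obtain c d where cd: "x<c" "c<p" "p<d" "d<x+int N" "Tpt c d" using maxim by blast
      have "\<not> d < q" using noncross[OF cd(5) pq(5)] cd pq by auto
      then have "(c, d) \<in> TP x y" using cd pq unfolding TP_def by auto
      then show False using fm[of c d] cd unfolding prec_def by auto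
    qed
  qed
  have 2: "Tb x q"
  proof (cases "q = x + int N - 1")
    case True then show ?thesis using border_2[OF Npos] unfolding Tb_def by simp
  next
    case False
    then have sq: "strip N x q" using pq s unfolding strip_def by auto
    show ?thesis
    proof (rule ccontr)
      assume "\<not> Tb x q"
      then have "good x q" using sq unfolding Tb_def good_def by simp
      then obtain c d where cd: "x<c" "c<q" "q<d" "d<x+int N" "Tpt c d" using maxim by blast
      have "\<not> p < c" using noncross[OF pq(5) cd(5)] cd pq by auto
      then have "(c, d) \<in> TP x y" using cd pq unfolding TP_def by auto
      then show False using fm[of c d] cd \<open>\<not> p < c\<close> unfolding prec_def by auto
    qed
  qed
  show ?thesis using 1 2 by simp
qed

lemma stair_last:
  assumes g: "good x y" and f: "is_last (TP x y) (p, q)"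
  shows "Tb p y \<and> Tb y q"
proof -
  have pq: "x < p" "p < y" "y < q" "q < x + int N" "Tpt p q" using f unfolding is_last_def TP_def by auto
  have s: "strip N x y" using g unfolding good_def by simp
  have fm: "\<And>c d. (c, d) \<in> TP x y \<Longrightarrow> (c, d) = (p, q) \<or> prec (c, d) (p, q)"
    using f unfolding is_last_def by blast
  have 1: "Tb p y"
  proof (cases "y = p + 1")
    case True then show ?thesis using border_1[OF Npos] unfolding Tb_def by simp
  next
    case False
    then have sp: "strip N p y" using pq s unfolding strip_def by auto
    show ?thesis
    proof (rule ccontr)
      assume "\<not> Tb p y"
      then have "good p y" using sp unfolding Tb_def good_def by simp
      then obtain c d where cd: "p<c" "c<y" "y<d" "d<p+int N" "Tpt c d" using maxim by blast
      have "\<not> q < d" using noncross[OF pq(5) cd(5)] cd pq by auto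
      then have "(c, d) \<in> TP x y" using cd pq unfolding TP_def by auto
      then show False using fm[of c d] cd unfolding prec_def by auto
    qed
  qed
  have 2: "Tb y q"
  proof (cases "q = y + 1")
    case True then show ?thesis using border_1[OF Npos] unfolding Tb_def by simp
  next
    case False
    then have sq: "strip N y q" using pq s unfolding strip_def by auto
    show ?thesis
    proof (rule ccontr)
      assume "\<not> Tb y q"
      then have "good y q" using sq unfolding Tb_def good_def by simp
      then obtain c d where cd: "y<c" "c<q" "q<d" "d<y+int N" "Tpt c d" using maxim by blast
      have "\<not> d < p + int N" using noncross[OF pq(5) cd(5)] cd pq by auto
      have t: "Tpt (d - int N) c" using Tpt_shift[OF cd(5)] .
      have "(d - int N, c) \<in> TP x y" using cd pq t \<open>\<not> d < p + int N\<close> unfolding TP_def by auto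
      then show False using fm[of "d - int N" c] cd \<open>\<not> d < p + int N\<close> unfolding prec_def by auto
    qed
  qed
  show ?thesis using 1 2 by simp
qed

lemma stair_consec:
  assumes g: "good x y" and a: "(u, v) \<in> TP x y" and b: "(u', v') \<in> TP x y"
    and pr: "prec (u, v) (u', v')"
    and nb: "\<forall>d\<in>TP x y. \<not> (prec (u, v) d \<and> prec d (u', v'))"
  shows "(u = u' \<and> v' < v \<and> Tb v' v) \<or> (v = v' \<and> u < u' \<and> Tb u u')"
proof -
  have A: "x < u" "u < y" "y < v" "v < x + int N" "Tpt u v" using a unfolding TP_def by auto
  have B: "x < u'" "u' < y" "y < v'" "v' < x + int N" "Tpt u' v'" using b unfolding TP_def by auto
  have s: "strip N x y" using g unfolding good_def by simp
  have ord: "u < u' \<and> v' \<le> v \<or> u = u' \<and> v' < v" using pr chain[OF a b] unfolding prec_def by auto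
  have sA: "strip N u v" "strip N u' v'" using A B unfolding Tpt_def by auto
  consider (c1) "u < u'" "v' < v" | (c2) "u = u'" "v' < v" | (c3) "u < u'" "v = v'" using ord by linarith
  then show ?thesis
  proof cases
    case c1
    have st: "strip N u' v" using sA c1 unfolding strip_def by auto
    show ?thesis
    proof (cases "pi N u' v \<in> T")
      case True
      then have "(u', v) \<in> TP x y" using st A B unfolding TP_def Tpt_def by auto
      moreover have "prec (u, v) (u', v)" "prec (u', v) (u', v')" using c1 unfolding prec_def by auto
      ultimately show ?thesis using nb by blast
    next
      case False
      then have "good u' v" using st unfolding good_def by simp
      then obtain c d where cd: "u'<c" "c<v" "v<d" "d<u'+int N" "Tpt c d" using maxim by blast
      have d1: "\<not> d < u + int N" using noncross[OF A(5) cd(5)] cd c1 by auto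
      have d2: "\<not> c < v'" using noncross[OF B(5) cd(5)] cd c1 by auto
      have t: "Tpt (d - int N) c" using Tpt_shift[OF cd(5)] .
      have "(d - int N, c) \<in> TP x y" using cd A B t d1 d2 unfolding TP_def by auto
      moreover have "prec (u, v) (d - int N, c)" "prec (d - int N, c) (u', v')"
        using d1 d2 cd c1 unfolding prec_def by auto
      ultimately show ?thesis using nb by blast
    qed
  next
    case c2
    show ?thesis
    proof (cases "v = v' + 1")
      case True then show ?thesis using c2 border_1[OF Npos] unfolding Tb_def by simp
    next
      case False
      have st: "strip N v' v" using sA c2 False unfolding strip_def by auto
      show ?thesis
      proof (rule ccontr)
        assume nt: "\<not> ?thesis"
        then have "pi N v' v \<notin> T" using c2 unfolding Tb_def by auto
        then have "good v' v" using st unfolding good_def by simp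
        then obtain c d where cd: "v'<c" "c<v" "v<d" "d<v'+int N" "Tpt c d" using maxim by blast
        have d1: "\<not> d < u + int N" using noncross[OF A(5) cd(5)] cd c2 A B by auto
        have sb: "Tpt v' (u + int N)"
        proof -
          have "pi N v' (u + int N) = pi N u v'" using pi_shift by simp
          moreover have "strip N v' (u + int N)" using sA(2) c2 unfolding strip_def by auto
          ultimately show ?thesis using B(5) c2 unfolding Tpt_def by simp
        qed
        have d2: "\<not> u + int N < d" using noncross[OF sb cd(5)] cd c2 A B by auto
        have t: "Tpt u c" using Tpt_shift[OF cd(5)] d1 d2 by (smt (verit))
        have "(u, c) \<in> TP x y" using cd A B t unfolding TP_def by auto
        moreover have "prec (u, v) (u, c)" "prec (u, c) (u', v')" using cd c2 unfolding prec_def by auto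
        ultimately show False using nb by blast
      qed
    qed
  next
    case c3
    show ?thesis
    proof (cases "u' = u + 1")
      case True then show ?thesis using c3 border_1[OF Npos] unfolding Tb_def by simp
    next
      case False
      have st: "strip N u u'" using sA A B c3 False s unfolding strip_def by auto
      show ?thesis
      proof (rule ccontr)
        assume nt: "\<not> ?thesis"
        then have "pi N u u' \<notin> T" using c3 unfolding Tb_def by auto
        then have "good u u'" using st unfolding good_def by simp
        then obtain c d where cd: "u<c" "c<u'" "u'<d" "d<u+int N" "Tpt c d" using maxim by blast
        have d1: "\<not> d < v" using noncross[OF cd(5) B(5)] cd c3 A B by auto
        have d2: "\<not> v < d" using noncross[OF A(5) cd(5)] cd c3 A B by auto
        have "(c, v) \<in> TP x y" using cd A B d1 d2 unfolding TP_def by auto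
        moreover have "prec (u, v) (c, v)" "prec (c, v) (u', v')" using cd c3 unfolding prec_def by auto
        ultimately show False using nb by blast
      qed
    qed
  qed
qed

end

context tri begin

lemma pi_swap_shift: "pi N X Y = pi N (Y - int N) X"
  using pi_shift(1)[of N "Y - int N" X] pi_shift(3)[of N X Y] by simp

lemma good_not_Tb: "good X Y \<Longrightarrow> \<not> Tb X Y"
  unfolding good_def Tb_def using border_strip[OF Npos] by blast

lemma cdist_lat:
  assumes "0 < Y - X" "Y - X < int N"
  shows "cdist N (nat (X mod int N)) (nat (Y mod int N)) = nat (Y - X)"
proof -
  have "int (cdist N (nat (X mod int N)) (nat (Y mod int N))) = (Y - X) mod int N" by (rule cdist_pi[OF Npos])
  also have "\<dots> = Y - X" using assms by (intro mod_small) auto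
  finally show ?thesis by simp
qed

lemma res_neq:
  assumes "0 < Y - X" "Y - X < int N"
  shows "nat (X mod int N) \<noteq> nat (Y mod int N)"
proof
  assume "nat (X mod int N) = nat (Y mod int N)"
  then have "X mod int N = Y mod int N" using nat_mod_inj[of "int N"] Npos by simp
  from modeq_cases[OF this] assms Npos show False by auto
qed

lemma arrow_A1:
  assumes "X < P" "P < Q" "Q < X + int N" "pi N X P \<in> T" "pi N X Q \<in> T" "Tb P Q"
  shows "arrow N T (pi N X Q) (pi N X P)"
proof -
  have 1: "pi N X P = {nat (X mod int N), nat (P mod int N)}" "pi N X Q = {nat (X mod int N), nat (Q mod int N)}"
    unfolding pi_def by auto
  have 2: "nat (P mod int N) \<noteq> nat (Q mod int N)" using res_neq assms by auto
  have 3: "{nat (P mod int N), nat (Q mod int N)} \<in> T \<or> border_edge N {nat (P mod int N), nat (Q mod int N)}"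
    using assms(6) unfolding Tb_def pi_def .
  have 4: "cdist N (nat (X mod int N)) (nat (P mod int N)) < cdist N (nat (X mod int N)) (nat (Q mod int N))"
  proof -
    have "cdist N (nat (X mod int N)) (nat (P mod int N)) = nat (P - X)" by (rule cdist_lat) (use assms in auto)
    moreover have "cdist N (nat (X mod int N)) (nat (Q mod int N)) = nat (Q - X)" by (rule cdist_lat) (use assms in auto)
    ultimately show ?thesis using assms by simp
  qed
  show ?thesis unfolding arrow_def using assms(4,5) 1 2 3 4 by blast
qed

lemma arrow_A3:
  assumes "X < P" "P < Q" "Q < X + int N" "pi N P Q \<in> T" "pi N X Q \<in> T" "Tb X P"
  shows "arrow N T (pi N P Q) (pi N X Q)"
proof -
  have 1: "pi N X Q = {nat (Q mod int N), nat (X mod int N)}" "pi N P Q = {nat (Q mod int N), nat (P mod int N)}"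
    unfolding pi_def by auto
  have 2: "nat (X mod int N) \<noteq> nat (P mod int N)" using res_neq assms by auto
  have 3: "{nat (X mod int N), nat (P mod int N)} \<in> T \<or> border_edge N {nat (X mod int N), nat (P mod int N)}"
    using assms(6) unfolding Tb_def pi_def .
  have m: "(X + int N) mod int N = X mod int N" "(P + int N) mod int N = P mod int N" by simp_all
  have "cdist N (nat (Q mod int N)) (nat ((X + int N) mod int N)) = nat (X + int N - Q)"
    by (rule cdist_lat) (use assms in auto)
  then have "cdist N (nat (Q mod int N)) (nat (X mod int N)) = nat (X + int N - Q)" using m by simp
  moreover have "cdist N (nat (Q mod int N)) (nat ((P + int N) mod int N)) = nat (P + int N - Q)"
    by (rule cdist_lat) (use assms in auto)
  then have "cdist N (nat (Q mod int N)) (nat (P mod int N)) = nat (P + int N - Q)" using m by simp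
  ultimately have 4: "cdist N (nat (Q mod int N)) (nat (X mod int N)) < cdist N (nat (Q mod int N)) (nat (P mod int N))"
    using assms by simp
  show ?thesis unfolding arrow_def using assms(4,5) 1 2 3 4 by blast
qed

end

context pctx begin

lemma good_corners:
  assumes "boxgood (x0, y0) (x1, y1)" "x0 \<le> x1" "y0 \<le> y1"
  shows "y0 - x1 \<ge> 2" "y1 - x0 \<le> int N - 2"
  using assms unfolding boxgood_def good_def strip_def by (metis fst_conv snd_conv order_refl)+

lemma lift_unique:
  assumes "pp Q = pp Q'" "boxgood P0 Q" "boxgood P0 Q'"
    "fst P0 \<le> fst Q" "snd P0 \<le> snd Q" "fst P0 \<le> fst Q'" "snd P0 \<le> snd Q'"
  shows "Q = Q'"
proof -
  obtain x0 y0 where P0: "P0 = (x0, y0)" by (cases P0)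
  obtain x1 y1 where Q: "Q = (x1, y1)" by (cases Q)
  obtain x2 y2 where Q': "Q' = (x2, y2)" by (cases Q')
  have c: "y0 - x1 \<ge> 2" "y1 - x0 \<le> int N - 2" "y0 - x2 \<ge> 2" "y2 - x0 \<le> int N - 2"
    using good_corners assms unfolding P0 Q Q' by auto
  have "pi N x1 y1 = pi N x2 y2" using assms(1) unfolding pp_def Q Q' by simp
  from pi_eq_cases[OF Npos this] have "x1 = x2 \<and> y1 = y2"
    using c assms(4-7) unfolding P0 Q Q' by (elim disjE conjE; simp; linarith)
  then show ?thesis unfolding Q Q' by simp
qed

lemma lift_same:
  assumes bg: "boxgood (x, y) (x', y')" and le: "x \<le> x'" "y \<le> y'"
    and uv: "x < u" "u < y" "y < v" "v < x + int N"
    and uv': "x' < u'" "u' < y'" "y' < v'" "v' < x' + int N"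
    and e: "pi N u v = pi N u' v'" and T: "pi N u v \<in> T"
  shows "u = u' \<and> v = v'"
proof -
  have c: "y - x' \<ge> 2" "y' - x \<le> int N - 2" using good_corners[OF bg le] by auto
  from pi_eq_cases[OF Npos e] show ?thesis
  proof
    assume "(u = u' \<or> u + int N \<le> u' \<or> u' + int N \<le> u) \<and> (v = v' \<or> v + int N \<le> v' \<or> v' + int N \<le> v)"
    then show ?thesis using c le uv uv' by (elim disjE conjE; linarith)
  next
    assume h: "(u = v' \<or> u + int N \<le> v' \<or> v' + int N \<le> u) \<and> (v = u' \<or> v + int N \<le> u' \<or> u' + int N \<le> v)"
    have "v = u'" "u < x'" using h c le uv uv' by (elim disjE conjE; linarith)+
    then have "good u v" using bg uv uv' le unfolding boxgood_def by auto
    then show ?thesis using T unfolding good_def by simp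
  qed
qed

lemma claimC:
  assumes bg: "boxgood (x0, y0) (x1, y1)" and le: "x0 \<le> x1" "y0 \<le> y1"
  shows "\<exists>u v. x1 < u \<and> u < y0 \<and> y1 < v \<and> v < x0 + int N \<and> Tpt u v"
proof (rule ccontr)
  assume nc: "\<not> ?thesis"
  have gP: "good x1 y0" using bg le unfolding boxgood_def by auto
  have c: "y0 - x1 \<ge> 2" "y1 - x0 \<le> int N - 2" using good_corners[OF bg le] by auto
  let ?S = "TP x1 y0"
  have tyA: "\<And>a. a \<in> ?S \<Longrightarrow> snd a \<le> y1 \<or> x0 + int N \<le> snd a"
    using nc unfolding TP_def by force
  have inbox: "\<And>X Y. x0 \<le> X \<Longrightarrow> X \<le> x1 \<Longrightarrow> y0 \<le> Y \<Longrightarrow> Y \<le> y1 \<Longrightarrow> \<not> Tb X Y"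
    using bg good_not_Tb unfolding boxgood_def by auto
  obtain f where f: "is_first ?S f" using first_exists[OF TP_finite TP_ne[OF gP]] by blast
  obtain p q where fpq: "f = (p, q)" by (cases f)
  have fS: "(p, q) \<in> ?S" using f fpq unfolding is_first_def by simp
  have fA: "x0 + int N \<le> q"
  proof (rule ccontr)
    assume "\<not> ?thesis"
    then have "q \<le> y1" using tyA[OF fS] by simp
    moreover have "y0 \<le> q" using fS unfolding TP_def by simp
    ultimately show False using stair_first[OF gP f[unfolded fpq]] inbox[of x1 q] le by simp
  qed
  obtain l where l: "is_last ?S l" using last_exists[OF TP_finite TP_ne[OF gP]] by blast
  obtain p' q' where lpq: "l = (p', q')" by (cases l)
  have lS: "(p', q') \<in> ?S" using l lpq unfolding is_last_def by simp
  have lC: "q' \<le> y1"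
  proof (rule ccontr)
    assume "\<not> ?thesis"
    then have q1: "x0 + int N \<le> q'" using tyA[OF lS] by simp
    have q2: "q' < x1 + int N" using lS unfolding TP_def by simp
    have "Tb y0 q'" using stair_last[OF gP l[unfolded lpq]] by simp
    then have "Tb (q' - int N) y0" unfolding Tb_def using pi_swap_shift[of y0 q'] by simp
    then show False using inbox[of "q' - int N" y0] q1 q2 le by simp
  qed
  let ?A = "{a \<in> ?S. x0 + int N \<le> snd a}"
  have Afin: "finite ?A" using TP_finite by simp
  have Ane: "?A \<noteq> {}" using fS fA by force
  obtain a where a: "is_last ?A a" using last_exists[OF Afin Ane] by blast
  have aS: "a \<in> ?S" and aA: "x0 + int N \<le> snd a" using a unfolding is_last_def by auto
  have "a \<noteq> l" using aA lC lpq c by auto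
  then have "prec a l" using l aS unfolding is_last_def by blast
  then obtain b where b: "b \<in> ?S" "prec a b" "\<forall>d\<in>?S. \<not> (prec a d \<and> prec d b)"
    using succ_exists[OF TP_finite l[unfolded is_last_def, THEN conjunct1]] by blast
  have bC: "snd b \<le> y1"
  proof (rule ccontr)
    assume "\<not> ?thesis"
    then have "b \<in> ?A" using tyA[OF b(1)] b(1) by auto
    then have "b = a \<or> prec b a" using a unfolding is_last_def by blast
    then show False using b(2) prec_irrefl prec_trans by blast
  qed
  obtain ua va where ap: "a = (ua, va)" by (cases a)
  obtain ub vb where bp: "b = (ub, vb)" by (cases b)
  have cons: "(ua = ub \<and> vb < va \<and> Tb vb va) \<or> (va = vb \<and> ua < ub \<and> Tb ua ub)"
    using stair_consec[OF gP aS[unfolded ap] b(1)[unfolded bp] b(2)[unfolded ap bp]] b(3) ap bp by simp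
  have "va \<noteq> vb" using aA bC ap bp c by auto
  then have tb: "Tb vb va" using cons by simp
  then have "Tb (va - int N) vb" unfolding Tb_def using pi_swap_shift[of vb va] by simp
  moreover have "x0 \<le> va - int N" "va - int N \<le> x1" "y0 \<le> vb" "vb \<le> y1"
    using aA aS b(1) bC ap bp unfolding TP_def by auto
  ultimately show False using inbox by blast
qed

end

context tri begin

lemma no_share1:
  assumes "x < u'" "u' < y" "y < v'" "v' < x + int N"
  shows "pi N u' v' \<noteq> pi N x z"
proof
  assume "pi N u' v' = pi N x z"
  from pi_eq_cases[OF Npos this] assms show False by (elim disjE conjE; linarith)
qed

lemma no_share2:
  assumes "x < u'" "u' < y" "y < v'" "v' < x + int N" "y - x \<le> int N - 2"
  shows "pi N u' v' \<noteq> pi N z y"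
proof
  assume "pi N u' v' = pi N z y"
  from pi_eq_cases[OF Npos this] assms show False by (elim disjE conjE; linarith)
qed

lemma rep_R2:
  assumes "f \<in> rep_hom N T (Theta_obj N T a) (Theta_obj N T a')" "f t r c \<noteq> 0"
  shows "r = 0 \<and> c = 0 \<and> t \<in> supp N T a \<and> t \<in> supp N T a'"
proof -
  have h: "\<forall>i r c. (fst (Theta_obj N T a') i \<le> r \<or> fst (Theta_obj N T a) i \<le> c) \<longrightarrow> f i r c = 0"
    using assms(1) unfolding rep_hom_def by blast
  have h1: "\<not> (fst (Theta_obj N T a') t \<le> r \<or> fst (Theta_obj N T a) t \<le> c)"
    using h assms(2) by blast
  have e: "fst (Theta_obj N T a') t = (if t \<in> supp N T a' then 1 else 0)"
    "fst (Theta_obj N T a) t = (if t \<in> supp N T a then 1 else 0)" by (simp_all add: Theta_obj_def)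
  show ?thesis using h1 unfolding e by (cases "t \<in> supp N T a'"; cases "t \<in> supp N T a"; simp)
qed

lemma rep_R1:
  assumes "f \<in> rep_hom N T (Theta_obj N T a) (Theta_obj N T a')" "t \<notin> T"
  shows "f t r c = 0"
  using assms unfolding rep_hom_def by auto

lemma rep_R3:
  assumes fh: "f \<in> rep_hom N T (Theta_obj N T a) (Theta_obj N T a')" and ar: "arrow N T j i"
  shows "(if i \<in> supp N T a' \<and> j \<in> supp N T a' then f j 0 0 else 0) =
         (if i \<in> supp N T a \<and> j \<in> supp N T a then f i 0 0 else 0)"
proof -
  have e: "mmul (snd (Theta_obj N T a') j i) (f j) (fst (Theta_obj N T a') j) 0 0 =
           mmul (f i) (snd (Theta_obj N T a) j i) (fst (Theta_obj N T a) i) 0 0"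
    using fh ar unfolding rep_hom_def by auto
  have l: "mmul (snd (Theta_obj N T a') j i) (f j) (fst (Theta_obj N T a') j) 0 0 =
      (if i \<in> supp N T a' \<and> j \<in> supp N T a' then f j 0 0 else 0)"
    by (simp add: mmul_def Theta_obj_def)
  have r: "mmul (f i) (snd (Theta_obj N T a) j i) (fst (Theta_obj N T a) i) 0 0 =
      (if i \<in> supp N T a \<and> j \<in> supp N T a then f i 0 0 else 0)"
    by (simp add: mmul_def Theta_obj_def)
  show ?thesis using e l r by simp
qed

end

locale fctx = pctx +
  fixes f :: "nat set \<Rightarrow> nat \<Rightarrow> nat \<Rightarrow> complex" and x0 y0 :: int
  assumes P0: "P0 = (x0, y0)" and gP0: "good x0 y0"
    and fh: "f \<in> rep_hom N T (Theta_obj N T al) (Theta_obj N T al')"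
begin

lemma al_pi: "al = pi N x0 y0" using P0al P0 unfolding pp_def by simp

lemma s0: "strip N x0 y0" using gP0 unfolding good_def by simp

lemma Sa_TP: "c \<in> TP x0 y0 \<Longrightarrow> pp c \<in> supp N T al"
  unfolding al_pi supp_pi[OF s0] TP_def supp_l_def Tpt_def pp_def by fastforce

lemma Sa_iff: "t \<in> supp N T al \<longleftrightarrow> t \<in> T \<and> supp_l x0 y0 t"
  unfolding al_pi using supp_pi[OF s0] .

lemma consec_eq:
  assumes a: "(u, v) \<in> TP x0 y0" and b: "(u', v') \<in> TP x0 y0" and pr: "prec (u, v) (u', v')"
    and nb: "\<forall>d\<in>TP x0 y0. \<not> (prec (u, v) d \<and> prec d (u', v'))"
    and ina: "pi N u v \<in> supp N T al'" and inb: "pi N u' v' \<in> supp N T al'"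
  shows "f (pi N u v) 0 0 = f (pi N u' v') 0 0"
proof -
  have A: "x0 < u" "u < y0" "y0 < v" "v < x0 + int N" "Tpt u v" using a unfolding TP_def by auto
  have B: "x0 < u'" "u' < y0" "y0 < v'" "v' < x0 + int N" "Tpt u' v'" using b unfolding TP_def by auto
  have sa: "pi N u v \<in> supp N T al" "pi N u' v' \<in> supp N T al" using Sa_TP[OF a] Sa_TP[OF b] unfolding pp_def by auto
  from stair_consec[OF gP0 a b pr nb] show ?thesis
  proof
    assume h: "u = u' \<and> v' < v \<and> Tb v' v"
    have "arrow N T (pi N u v) (pi N u v')"
      using arrow_A1[of u v' v] h A B unfolding Tpt_def by auto
    from rep_R3[OF fh this] show ?thesis using sa ina inb h by simp
  next
    assume h: "v = v' \<and> u < u' \<and> Tb u u'"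
    have "arrow N T (pi N u' v) (pi N u v)"
      using arrow_A3[of u u' v] h A B unfolding Tpt_def by auto
    from rep_R3[OF fh this] show ?thesis using sa ina inb h by simp
  qed
qed

end

context fctx begin

definition inC :: "int \<Rightarrow> int \<Rightarrow> int \<times> int \<Rightarrow> bool" where
  "inC x y c \<longleftrightarrow> x < fst c \<and> fst c < y \<and> y < snd c \<and> snd c < x + int N"

definition K :: "int \<Rightarrow> int \<Rightarrow> (int \<times> int) set" where
  "K x1 y1 = {c \<in> TP x0 y0. inC x1 y1 c}"

lemma K_finite: "finite (K x1 y1)"
  unfolding K_def using TP_finite by simp

lemma inC_supp:
  assumes "strip N x1 y1" "al' = pi N x1 y1" "c \<in> TP x0 y0" "inC x1 y1 c"
  shows "pp c \<in> supp N T al'"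
proof -
  have "pp c \<in> T" using assms(3) unfolding TP_def Tpt_def pp_def by auto
  moreover have "supp_l x1 y1 (pp c)" using assms(4) unfolding supp_l_def inC_def pp_def by auto
  ultimately show ?thesis using supp_pi[OF assms(1)] assms(2) by simp
qed

lemma prec_le:
  assumes "a \<in> TP x0 y0" "b \<in> TP x0 y0" "prec a b"
  shows "fst a \<le> fst b \<and> snd b \<le> snd a"
  using assms chain[OF assms(1,2)] unfolding prec_def by auto

lemma K_const_first:
  assumes s1: "strip N x1 y1" and a': "al' = pi N x1 y1" and fK: "is_first (K x1 y1) fk"
  shows "c \<in> K x1 y1 \<Longrightarrow> f (pp c) 0 0 = f (pp fk) 0 0"
proof (induction "card {d \<in> K x1 y1. prec d c}" arbitrary: c rule: less_induct)
  case less
  show ?case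
  proof (cases "c = fk")
    case True then show ?thesis by simp
  next
    case False
    have fkK: "fk \<in> K x1 y1" using fK unfolding is_first_def by simp
    have pfc: "prec fk c" using fK less.prems False unfolding is_first_def by blast
    have cTP: "c \<in> TP x0 y0" and fkTP: "fk \<in> TP x0 y0" using less.prems fkK unfolding K_def by auto
    obtain b where b: "b \<in> TP x0 y0" "prec b c" "\<forall>d\<in>TP x0 y0. \<not> (prec b d \<and> prec d c)"
      using pred_exists[OF TP_finite fkTP pfc] by blast
    have fb: "fk = b \<or> prec fk b"
    proof (rule ccontr)
      assume "\<not> ?thesis"
      then have "prec b fk" using prec_total by blast
      then show False using b(3) fkTP pfc by blast
    qed
    have bd1: "fst fk \<le> fst b \<and> snd b \<le> snd fk" using fb prec_le[OF fkTP b(1)] by auto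
    have bd2: "fst b \<le> fst c \<and> snd c \<le> snd b" using prec_le[OF b(1) cTP b(2)] .
    have "inC x1 y1 fk" "inC x1 y1 c" using fkK less.prems unfolding K_def by auto
    then have "inC x1 y1 b" using bd1 bd2 unfolding inC_def by auto
    then have bK: "b \<in> K x1 y1" using b(1) unfolding K_def by simp
    have sub: "{d \<in> K x1 y1. prec d b} \<subset> {d \<in> K x1 y1. prec d c}"
      using bK b(2) prec_trans prec_irrefl by blast
    have "card {d \<in> K x1 y1. prec d b} < card {d \<in> K x1 y1. prec d c}"
      using psubset_card_mono[OF _ sub] K_finite by simp
    then have ih: "f (pp b) 0 0 = f (pp fk) 0 0" using less.hyps bK by blast
    obtain ub vb where bp: "b = (ub, vb)" by (cases b)
    obtain uc vc where cp: "c = (uc, vc)" by (cases c)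
    have "f (pi N ub vb) 0 0 = f (pi N uc vc) 0 0"
      using consec_eq[of ub vb uc vc] b bp cp cTP inC_supp[OF s1 a'] \<open>inC x1 y1 b\<close> \<open>inC x1 y1 c\<close>
      unfolding pp_def by auto
    then show ?thesis using ih bp cp unfolding pp_def by simp
  qed
qed

lemma K_const:
  assumes s1: "strip N x1 y1" and a': "al' = pi N x1 y1" and c: "c \<in> K x1 y1" "c' \<in> K x1 y1"
  shows "f (pp c) 0 0 = f (pp c') 0 0"
proof -
  have "K x1 y1 \<noteq> {}" using c by auto
  then obtain fk where "is_first (K x1 y1) fk" using first_exists K_finite by blast
  then show ?thesis using K_const_first[OF s1 a'] c by metis
qed

lemma kill_vert:
  assumes a: "(u, va) \<in> TP x0 y0" and b: "(u, vb) \<in> TP x0 y0" and lt: "va < vb" and tb: "Tb va vb"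
    and nb: "pi N u vb \<notin> supp N T al'"
  shows "f (pi N u va) 0 0 = 0"
proof -
  have A: "x0 < u" "u < y0" "y0 < va" "va < x0 + int N" "Tpt u va" using a unfolding TP_def by auto
  have B: "y0 < vb" "vb < x0 + int N" "Tpt u vb" using b unfolding TP_def by auto
  have "arrow N T (pi N u vb) (pi N u va)" using arrow_A1[of u va vb] A B lt tb unfolding Tpt_def by auto
  from rep_R3[OF fh this] show ?thesis using nb Sa_TP[OF a] Sa_TP[OF b] unfolding pp_def by simp
qed

lemma kill_horiz:
  assumes a: "(ua, v) \<in> TP x0 y0" and b: "(ub, v) \<in> TP x0 y0" and lt: "ua < ub" and tb: "Tb ua ub"
    and nb: "pi N ub v \<notin> supp N T al'"
  shows "f (pi N ua v) 0 0 = 0"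
proof -
  have A: "x0 < ua" "ua < y0" "y0 < v" "v < x0 + int N" "Tpt ua v" using a unfolding TP_def by auto
  have B: "ub < y0" "Tpt ub v" using b unfolding TP_def by auto
  have "arrow N T (pi N ub v) (pi N ua v)" using arrow_A3[of ua ub v] A B lt tb unfolding Tpt_def by auto
  from rep_R3[OF fh this] show ?thesis using nb Sa_TP[OF a] Sa_TP[OF b] unfolding pp_def by simp
qed

lemma kill_first:
  assumes a: "(p, q) \<in> TP x0 y0" and T1: "pi N x0 q \<in> T" and tb: "Tb x0 p"
    and i1: "pi N x0 q \<in> supp N T al'" and i2: "pi N p q \<in> supp N T al'"
  shows "f (pi N p q) 0 0 = 0"
proof -
  have A: "x0 < p" "p < y0" "y0 < q" "q < x0 + int N" "Tpt p q" using a unfolding TP_def by auto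
  have "arrow N T (pi N p q) (pi N x0 q)" using arrow_A3[of x0 p q] A T1 tb unfolding Tpt_def by auto
  moreover have "pi N x0 q \<notin> supp N T al"
    unfolding Sa_iff supp_l_def using no_share1 by blast
  ultimately show ?thesis using rep_R3[OF fh] i1 i2 by fastforce
qed

lemma kill_last:
  assumes a: "(p, q) \<in> TP x0 y0" and T1: "pi N p y0 \<in> T" and tb: "Tb y0 q"
    and i1: "pi N p y0 \<in> supp N T al'" and i2: "pi N p q \<in> supp N T al'"
  shows "f (pi N p q) 0 0 = 0"
proof -
  have A: "x0 < p" "p < y0" "y0 < q" "q < x0 + int N" "Tpt p q" using a unfolding TP_def by auto
  have "arrow N T (pi N p q) (pi N p y0)" using arrow_A1[of p y0 q] A T1 tb unfolding Tpt_def by auto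
  moreover have "pi N p y0 \<notin> supp N T al"
    unfolding Sa_iff supp_l_def using no_share2 s0 unfolding strip_def by blast
  ultimately show ?thesis using rep_R3[OF fh] i1 i2 by fastforce
qed

end

context fctx begin

lemma G1:
  assumes s1: "strip N x1 y1" and a': "al' = pi N x1 y1" and t0: "t0 \<in> TP x0 y0" "inC x1 y1 t0"
    and nz: "f (pp t0) 0 0 \<noteq> 0"
  shows "x0 \<le> x1 \<and> y0 \<le> y1"
proof (rule ccontr)
  assume nle: "\<not> (x0 \<le> x1 \<and> y0 \<le> y1)"
  have s0': "y0 - x0 \<ge> 2" "y0 - x0 \<le> int N - 2" using s0 unfolding strip_def by auto
  have s1': "y1 - x1 \<ge> 2" "y1 - x1 \<le> int N - 2" using s1 unfolding strip_def by auto
  have t0K: "t0 \<in> K x1 y1" using t0 unfolding K_def by simp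
  have Kne: "K x1 y1 \<noteq> {}" using t0K by auto
  have const: "\<And>c. c \<in> K x1 y1 \<Longrightarrow> f (pp c) 0 0 \<noteq> 0"
    using K_const[OF s1 a' _ t0K] nz by metis
  have Sb: "\<And>t. t \<in> supp N T al' \<longleftrightarrow> t \<in> T \<and> supp_l x1 y1 t" using supp_pi[OF s1] a' by simp
  show False
  proof (cases "x1 < x0")
    case True
    obtain a where aF: "is_first (K x1 y1) a" using first_exists[OF K_finite Kne] by blast
    obtain p q where ap: "a = (p, q)" by (cases a)
    have aK: "(p, q) \<in> K x1 y1" using aF ap unfolding is_first_def by simp
    have aT: "(p, q) \<in> TP x0 y0" and aC: "inC x1 y1 (p, q)" using aK unfolding K_def by auto
    have A: "x0 < p" "p < y0" "y0 < q" "q < x0 + int N" using aT unfolding TP_def by auto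
    have AC: "x1 < p" "p < y1" "y1 < q" "q < x1 + int N" using aC unfolding inC_def by auto
    have nz': "f (pi N p q) 0 0 \<noteq> 0" using const[OF aK] unfolding pp_def by simp
    have aSb: "pi N p q \<in> supp N T al'" using inC_supp[OF s1 a' aT aC] unfolding pp_def by simp
    show False
    proof (cases "\<exists>c\<in>TP x0 y0. prec c (p, q)")
      case False
      then have "is_first (TP x0 y0) (p, q)" using aT prec_total unfolding is_first_def by blast
      then have tb: "Tb x0 p" "Tb x0 q" using stair_first[OF gP0] by auto
      have sq: "strip N x0 q" using A AC True s0' unfolding strip_def by auto
      then have qT: "pi N x0 q \<in> T" using tb(2) border_strip[OF Npos] unfolding Tb_def by blast
      have "pi N x0 q \<in> supp N T al'" unfolding Sb supp_l_def
        apply (intro conjI qT) apply (rule exI[of _ x0], rule exI[of _ q]) using A AC True by auto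
      then show False using kill_first[OF aT qT tb(1) _ aSb] nz' by simp
    next
      case True
      then obtain c where "c \<in> TP x0 y0" "prec c (p, q)" by blast
      then obtain b where b: "b \<in> TP x0 y0" "prec b (p, q)" "\<forall>d\<in>TP x0 y0. \<not> (prec b d \<and> prec d (p, q))"
        using pred_exists[OF TP_finite] by blast
      obtain ub vb where bp: "b = (ub, vb)" by (cases b)
      have bK: "b \<notin> K x1 y1"
      proof
        assume "b \<in> K x1 y1"
        then have "b = (p, q) \<or> prec (p, q) b" using aF ap unfolding is_first_def by blast
        then show False using b(2) prec_irrefl prec_trans by blast
      qed
      have le: "ub \<le> p" "q \<le> vb" using prec_le[OF b(1) aT b(2)] bp by auto
      have B: "x0 < ub" "vb < x0 + int N" using b(1) bp unfolding TP_def by auto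
      have vb: "x1 + int N \<le> vb" using bK b(1) bp le B AC \<open>x1 < x0\<close> unfolding K_def inC_def by auto
      have cons: "(ub = p \<and> q < vb \<and> Tb q vb) \<or> (vb = q \<and> ub < p \<and> Tb ub p)"
        using stair_consec[OF gP0 b(1)[unfolded bp] aT b(2)[unfolded bp]] b(3) bp by simp
      then have c1: "ub = p" "Tb q vb" using vb AC by auto
      have "pi N p vb \<notin> supp N T al'"
      proof
        assume "pi N p vb \<in> supp N T al'"
        then obtain u' v' where uv': "x1 < u'" "u' < y1" "y1 < v'" "v' < x1 + int N" "pi N p vb = pi N u' v'"
          unfolding Sb supp_l_def by blast
        from pi_eq_cases[OF Npos uv'(5)] show False
          using uv' A AC vb B le \<open>x1 < x0\<close> by (elim disjE conjE; linarith)
      qed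
      then have "f (pi N p q) 0 0 = 0"
        using kill_vert[of p q vb] aT b(1) bp c1 le A AC vb by auto
      then show False using nz' by simp
    qed
  next
    case False
    then have x01: "x0 \<le> x1" and y10: "y1 < y0" using nle by auto
    obtain a where aL: "is_last (K x1 y1) a" using last_exists[OF K_finite Kne] by blast
    obtain p q where ap: "a = (p, q)" by (cases a)
    have aK: "(p, q) \<in> K x1 y1" using aL ap unfolding is_last_def by simp
    have aT: "(p, q) \<in> TP x0 y0" and aC: "inC x1 y1 (p, q)" using aK unfolding K_def by auto
    have A: "x0 < p" "p < y0" "y0 < q" "q < x0 + int N" using aT unfolding TP_def by auto
    have AC: "x1 < p" "p < y1" "y1 < q" "q < x1 + int N" using aC unfolding inC_def by auto
    have nz': "f (pi N p q) 0 0 \<noteq> 0" using const[OF aK] unfolding pp_def by simp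
    have aSb: "pi N p q \<in> supp N T al'" using inC_supp[OF s1 a' aT aC] unfolding pp_def by simp
    show False
    proof (cases "\<exists>c\<in>TP x0 y0. prec (p, q) c")
      case False
      then have "is_last (TP x0 y0) (p, q)" using aT prec_total unfolding is_last_def by blast
      then have tb: "Tb p y0" "Tb y0 q" using stair_last[OF gP0] by auto
      have sq: "strip N p y0" using A AC y10 x01 s0' unfolding strip_def by auto
      then have qT: "pi N p y0 \<in> T" using tb(1) border_strip[OF Npos] unfolding Tb_def by blast
      have "pi N p y0 \<in> supp N T al'" unfolding Sb supp_l_def
        apply (intro conjI qT) apply (rule exI[of _ p], rule exI[of _ y0]) using A AC y10 by auto
      then show False using kill_last[OF aT qT tb(2) _ aSb] nz' by simp
    next
      case True
      then obtain c where "c \<in> TP x0 y0" "prec (p, q) c" by blast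
      then obtain b where b: "b \<in> TP x0 y0" "prec (p, q) b" "\<forall>d\<in>TP x0 y0. \<not> (prec (p, q) d \<and> prec d b)"
        using succ_exists[OF TP_finite] by blast
      obtain ub vb where bp: "b = (ub, vb)" by (cases b)
      have bK: "b \<notin> K x1 y1"
      proof
        assume "b \<in> K x1 y1"
        then have "b = (p, q) \<or> prec b (p, q)" using aL ap unfolding is_last_def by blast
        then show False using b(2) prec_irrefl prec_trans by blast
      qed
      have le: "p \<le> ub" "vb \<le> q" using prec_le[OF aT b(1) b(2)] bp by auto
      have B: "ub < y0" "y0 < vb" using b(1) bp unfolding TP_def by auto
      have ub: "y1 \<le> ub" using bK b(1) bp le B AC y10 unfolding K_def inC_def by auto
      have cons: "(p = ub \<and> vb < q \<and> Tb vb q) \<or> (q = vb \<and> p < ub \<and> Tb p ub)"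
        using stair_consec[OF gP0 aT b(1)[unfolded bp] b(2)[unfolded bp]] b(3) bp by simp
      then have c1: "vb = q" "Tb p ub" "p < ub" using ub AC by auto
      have "pi N ub q \<notin> supp N T al'"
      proof
        assume "pi N ub q \<in> supp N T al'"
        then obtain u' v' where uv': "x1 < u'" "u' < y1" "y1 < v'" "v' < x1 + int N" "pi N ub q = pi N u' v'"
          unfolding Sb supp_l_def by blast
        from pi_eq_cases[OF Npos uv'(5)] show False
          using uv' A AC ub B le x01 y10 s0' by (elim disjE conjE; linarith)
      qed
      then have "f (pi N p q) 0 0 = 0"
        using kill_horiz[of p q ub] aT b(1) bp c1 by auto
      then show False using nz' by simp
    qed
  qed
qed

end

lemma Theta_lin_lin:
  assumes "finite {p. a p \<noteq> 0}" "finite {p. b p \<noteq> 0}"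
  shows "Theta_lin N T (\<lambda>w. a w - k * b w) = (\<lambda>i r s. Theta_lin N T a i r s - k * Theta_lin N T b i r s)"
proof -
  let ?F = "{p. a p \<noteq> 0} \<union> {p. b p \<noteq> 0}"
  have F: "finite ?F" using assms by simp
  have "Theta_lin N T (\<lambda>w. a w - k * b w) = (\<lambda>i r s. \<Sum>p\<in>?F. (a p - k * b p) * Theta_path N T p i r s)"
    by (rule Theta_lin_finite[OF F]) auto
  moreover have "Theta_lin N T a = (\<lambda>i r s. \<Sum>p\<in>?F. a p * Theta_path N T p i r s)"
    by (rule Theta_lin_finite[OF F]) auto
  moreover have "Theta_lin N T b = (\<lambda>i r s. \<Sum>p\<in>?F. b p * Theta_path N T p i r s)"
    by (rule Theta_lin_finite[OF F]) auto
  ultimately show ?thesis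
    by (simp add: left_diff_distrib sum_subtractf sum_distrib_left mult.assoc)
qed

lemma Theta_lin_ee: "Theta_lin N T (ee p) = Theta_path N T p"
proof -
  have "Theta_lin N T (ee p) = (\<lambda>i r s. \<Sum>q\<in>{p}. ee p q * Theta_path N T q i r s)"
    by (rule Theta_lin_finite) (auto simp: ee_def)
  then show ?thesis by (simp add: ee_def)
qed

context tri begin

lemma supp_box:
  assumes "strip N X Y" "X < u" "u < Y" "Y < v" "v < X + int N" "pi N u v \<in> T"
  shows "pi N u v \<in> supp N T (pi N X Y)"
  using supp_pi[OF assms(1)] assms unfolding supp_l_def by blast

end

context pctx begin

lemma boxgood_strip: "boxgood P Q \<Longrightarrow> fst P \<le> X \<Longrightarrow> X \<le> fst Q \<Longrightarrow> snd P \<le> Y \<Longrightarrow> Y \<le> snd Q \<Longrightarrow> strip N X Y"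
  unfolding boxgood_def good_def by blast

lemma theta_can_nz:
  assumes gP: "good (fst P0) (snd P0)" and bg: "boxgood P0 Q" and le: "fst P0 \<le> fst Q" "snd P0 \<le> snd Q"
  shows "\<exists>i. Theta_path N T (img P0 (can (nat (fst Q - fst P0)) (nat (snd Q - snd P0)))) i 0 0 = 1"
proof -
  obtain x0 y0 where P0: "P0 = (x0, y0)" by (cases P0)
  obtain x1 y1 where Q: "Q = (x1, y1)" by (cases Q)
  obtain u v where uv: "x1 < u" "u < y0" "y1 < v" "v < x0 + int N" "Tpt u v"
    using claimC[of x0 y0 x1 y1] bg le unfolding P0 Q by auto
  let ?w = "can (nat (x1 - x0)) (nat (y1 - y0))"
  have e: "endp P0 ?w = Q" unfolding endp_counts P0 Q using le P0 Q by simp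
  have "\<forall>\<beta>\<in>set (img P0 ?w). pi N u v \<in> supp N T \<beta>"
  proof
    fix \<beta> assume "\<beta> \<in> set (img P0 ?w)"
    then obtain q where q: "q \<in> set (walk P0 ?w)" "\<beta> = pp q" unfolding img_def by auto
    have b: "x0 \<le> fst q" "fst q \<le> x1" "y0 \<le> snd q" "snd q \<le> y1" using walk_box[OF q(1)] e P0 Q by auto
    have s: "strip N (fst q) (snd q)" using boxgood_strip[OF bg] b P0 Q by auto
    show "pi N u v \<in> supp N T \<beta>" unfolding q(2) pp_def
      by (rule supp_box[OF s]) (use b uv in \<open>auto simp: Tpt_def\<close>)
  qed
  moreover have "img P0 ?w \<noteq> []" unfolding img_def by simp
  ultimately show ?thesis using Theta_path_formula unfolding P0 Q by (metis fst_conv snd_conv)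
qed

lemma faithful:
  assumes gP: "good (fst P0) (snd P0)" and c: "c \<in> free_hom N T al al'" and z: "Theta_lin N T c = (\<lambda>i r s. 0)"
  shows "c \<in> mesh_span N T al al'"
proof -
  define Sp where "Sp = {p. c p \<noteq> 0}"
  have Spf: "finite Sp" using c unfolding free_hom_def Sp_def by blast
  have Spp: "\<And>p. p \<in> Sp \<Longrightarrow> piv_path N T p \<and> hd p = al \<and> last p = al'"
    using c unfolding free_hom_def Sp_def by blast
  have sP: "strip N (fst P0) (snd P0)" using gP unfolding good_def by simp
  have exw: "\<And>p. p \<in> Sp \<Longrightarrow> \<exists>w. img P0 w = p \<and> valid P0 w"
  proof -
    fix p assume "p \<in> Sp"
    then have "piv_path N T p" "hd p = pi N (fst P0) (snd P0)" using Spp P0al unfolding pp_def by auto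
    from lift_path[OF this(1) sP this(2)] show "\<exists>w. img P0 w = p \<and> valid P0 w" by simp
  qed
  define W where "W p = (SOME w. img P0 w = p \<and> valid P0 w)" for p
  have W: "\<And>p. p \<in> Sp \<Longrightarrow> img P0 (W p) = p \<and> valid P0 (W p)"
  proof -
    fix p assume "p \<in> Sp"
    from someI_ex[OF exw[OF this]] show "img P0 (W p) = p \<and> valid P0 (W p)" unfolding W_def .
  qed
  have okW: "\<And>p. p \<in> Sp \<Longrightarrow> ok (W p)"
  proof -
    fix p assume p: "p \<in> Sp"
    have "pp (endp P0 (W p)) = last (img P0 (W p))" using last_img by simp
    also have "\<dots> = al'" using W[OF p] Spp[OF p] by simp
    finally show "ok (W p)" unfolding ok_def using W[OF p] by simp
  qed
  have geW: "\<And>p. fst P0 \<le> fst (endp P0 (W p)) \<and> snd P0 \<le> snd (endp P0 (W p))"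
    unfolding endp_counts by simp
  define G where "G = {p \<in> Sp. boxgood P0 (endp P0 (W p))}"
  have EW: "\<And>p. p \<in> Sp \<Longrightarrow> E (W p) = ee p" unfolding E_def using W by simp
  have badS: "\<And>p. p \<in> Sp \<Longrightarrow> p \<notin> G \<Longrightarrow> inS (ee p)"
  proof -
    fix p assume p: "p \<in> Sp" "p \<notin> G"
    then obtain X Y where XY: "fst P0 \<le> X" "X \<le> fst (endp P0 (W p))" "snd P0 \<le> Y" "Y \<le> snd (endp P0 (W p))" "\<not> good X Y"
      unfolding G_def boxgood_def by blast
    have "inS (E ([] @ W p @ []))" using boxB[of "[]" "W p" "[]" X Y] okW[OF p(1)] XY by simp
    then show "inS (ee p)" using EW[OF p(1)] by simp
  qed
  have csum: "c = (\<lambda>w. \<Sum>p\<in>Sp. c p * ee p w)"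
  proof
    fix w
    have "(\<Sum>p\<in>Sp. c p * ee p w) = (\<Sum>p\<in>Sp. if w = p then c p else 0)"
      by (intro sum.cong) (auto simp: ee_def)
    also have "\<dots> = c w" using Spf by (simp add: Sp_def)
    finally show "c w = (\<Sum>p\<in>Sp. c p * ee p w)" by simp
  qed
  show ?thesis
  proof (cases "G = {}")
    case True
    have "(\<lambda>w. \<Sum>p\<in>Sp. c p * ee p w) \<in> mesh_span N T al al'"
      using span_sum[OF Spf, of "\<lambda>p w. c p * ee p w"] span_scale badS True unfolding inS_def by blast
    then show ?thesis using csum by simp
  next
    case False
    then obtain p1 where p1: "p1 \<in> G" by blast
    define Q where "Q = endp P0 (W p1)"
    have p1S: "p1 \<in> Sp" and bgQ: "boxgood P0 Q" using p1 unfolding G_def Q_def by auto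
    have ppQ: "pp Q = al'" using okW[OF p1S] unfolding ok_def Q_def by simp
    have QG: "\<And>p. p \<in> G \<Longrightarrow> endp P0 (W p) = Q"
    proof -
      fix p assume p: "p \<in> G"
      have "pp (endp P0 (W p)) = al'" using okW p unfolding ok_def G_def by auto
      then show "endp P0 (W p) = Q"
        using lift_unique[of "endp P0 (W p)" Q] ppQ bgQ p geW[of p] geW[of p1] unfolding G_def Q_def by auto
    qed
    define w0 where "w0 = can (cT (W p1)) (cF (W p1))"
    define p0 where "p0 = img P0 w0"
    have goodG: "\<And>p. p \<in> G \<Longrightarrow> inS (\<lambda>z. ee p z - ee p0 z)"
    proof -
      fix p assume p: "p \<in> G"
      have pS: "p \<in> Sp" using p unfolding G_def by simp
      have "eqv ([] @ W p @ []) ([] @ can (cT (W p)) (cF (W p)) @ [])"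
        using boxA[of "[]" "W p" "[]"] okW[OF pS] p unfolding G_def by simp
      moreover have "cT (W p) = cT (W p1)" "cF (W p) = cF (W p1)"
        using QG[OF p] unfolding Q_def endp_counts by auto
      ultimately show "inS (\<lambda>z. ee p z - ee p0 z)" using EW[OF pS] unfolding eqv_def E_def p0_def w0_def by simp
    qed
    define lam where "lam = (\<Sum>p\<in>G. c p)"
    define g where "g p = (if p \<in> G then (\<lambda>z. ee p z - ee p0 z) else ee p)" for p
    have gS: "\<And>p. p \<in> Sp \<Longrightarrow> inS (g p)" unfolding g_def using goodG badS by auto
    have GS: "G \<subseteq> Sp" unfolding G_def by auto
    have dsum: "(\<lambda>w. c w - lam * ee p0 w) = (\<lambda>w. \<Sum>p\<in>Sp. c p * g p w)"
    proof
      fix w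
      have "(\<Sum>p\<in>Sp. c p * g p w) = (\<Sum>p\<in>Sp. c p * ee p w) - (\<Sum>p\<in>Sp. if p \<in> G then c p * ee p0 w else 0)"
      proof -
        have "c p * g p w = c p * ee p w - (if p \<in> G then c p * ee p0 w else 0)" for p
          unfolding g_def by (simp add: right_diff_distrib)
        then show ?thesis by (simp add: sum_subtractf)
      qed
      also have "(\<Sum>p\<in>Sp. if p \<in> G then c p * ee p0 w else 0) = (\<Sum>p\<in>G. c p * ee p0 w)"
        using sum.inter_restrict[OF Spf, of "\<lambda>p. c p * ee p0 w" G] GS by (simp add: Int_absorb1)
      also have "\<dots> = lam * ee p0 w" unfolding lam_def by (simp add: sum_distrib_right)
      finally show "c w - lam * ee p0 w = (\<Sum>p\<in>Sp. c p * g p w)" using csum by (metis (no_types))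
    qed
    have dS: "(\<lambda>w. c w - lam * ee p0 w) \<in> mesh_span N T al al'"
      unfolding dsum using span_sum[OF Spf, of "\<lambda>p w. c p * g p w"] span_scale gS unfolding inS_def by blast
    have th0: "Theta_lin N T (\<lambda>w. c w - lam * ee p0 w) = (\<lambda>i r s. 0)" using Theta_span[OF dS] .
    have fin1: "finite {p. c p \<noteq> 0}" using Spf unfolding Sp_def .
    have fin2: "finite {p. ee p0 p \<noteq> 0}" by (rule finite_subset[of _ "{p0}"]) (auto simp: ee_def)
    have lin: "Theta_lin N T (\<lambda>w. c w - lam * ee p0 w) = (\<lambda>i r s. 0 - lam * Theta_path N T p0 i r s)"
      using Theta_lin_lin[OF fin1 fin2, of N T lam] z Theta_lin_ee[of N T p0] by simp
    have geQ: "fst P0 \<le> fst Q" "snd P0 \<le> snd Q" using geW[of p1] unfolding Q_def by auto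
    obtain i where i: "Theta_path N T (img P0 (can (nat (fst Q - fst P0)) (nat (snd Q - snd P0)))) i 0 0 = 1"
      using theta_can_nz[OF gP bgQ geQ] by blast
    have "can (nat (fst Q - fst P0)) (nat (snd Q - snd P0)) = w0"
      unfolding w0_def Q_def endp_counts by simp
    then have "Theta_path N T p0 i 0 0 = 1" using i unfolding p0_def by simp
    moreover have "0 - lam * Theta_path N T p0 i 0 0 = 0" using th0 lin by metis
    ultimately have "lam = 0" by simp
    then show ?thesis using dS by simp
  qed
qed

end

context fctx begin

lemma lift_Q:
  assumes t0: "(u, v) \<in> TP x0 y0" and tS: "pi N u v \<in> supp N T al'" and a'd: "diagonal N al'"
  shows "\<exists>x1 y1. strip N x1 y1 \<and> al' = pi N x1 y1 \<and> inC x1 y1 (u, v)"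
proof -
  have tp: "Tpt u v" using t0 unfolding TP_def by simp
  have su: "strip N u v" using tp unfolding Tpt_def by simp
  have "crosses N (pi N u v) al'" using tS unfolding supp_def by simp
  have lt: "\<forall>z\<in>al'. z < N" using a'd unfolding diagonal_def by auto
  from \<open>crosses N (pi N u v) al'\<close> obtain x' y' where xy: "u < x'" "x' < v" "v < y'" "y' < u + int N" "al' = pi N x' y'"
    using cross_lift1[OF Npos su lt] by blast
  have "al' = pi N (y' - int N) x'" using xy(5) pi_swap_shift by simp
  moreover have "strip N (y' - int N) x'" using xy unfolding strip_def by auto
  moreover have "inC (y' - int N) x' (u, v)" using xy unfolding inC_def by auto
  ultimately show ?thesis by blast
qed

lemma box_from_t:
  assumes t0: "(u, v) \<in> TP x0 y0" "inC x1 y1 (u, v)" and le: "x0 \<le> x1" "y0 \<le> y1"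
  shows "boxgood P0 (x1, y1)"
  unfolding boxgood_def P0
proof (intro allI impI)
  fix X Y assume b: "fst (x0, y0) \<le> X \<and> X \<le> fst (x1, y1) \<and> snd (x0, y0) \<le> Y \<and> Y \<le> snd (x1, y1)"
  have A: "x0 < u" "u < y0" "y0 < v" "v < x0 + int N" "Tpt u v" using t0(1) unfolding TP_def by auto
  have C: "x1 < u" "u < y1" "y1 < v" "v < x1 + int N" using t0(2) unfolding inC_def by auto
  have s: "strip N X Y" using b A C unfolding strip_def by auto
  have "pi N X Y \<notin> T"
  proof
    assume "pi N X Y \<in> T"
    then have "Tpt X Y" using s unfolding Tpt_def by simp
    from noncross[OF this A(5)] b A C show False by auto
  qed
  then show "good X Y" using s unfolding good_def by simp
qed

lemma fullness:
  assumes a'pos: "pos_root N T al'"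
  shows "\<exists>c\<in>free_hom N T al al'. Theta_lin N T c = f"
proof (cases "\<forall>t r s. f t r s = 0")
  case True
  have "(\<lambda>_. 0) \<in> free_hom N T al al'" unfolding free_hom_def by simp
  moreover have "Theta_lin N T (\<lambda>_. 0) = f" using True unfolding Theta_lin_def by (auto intro!: ext)
  ultimately show ?thesis by blast
next
  case False
  then obtain t r s where frs: "f t r s \<noteq> 0" by blast
  from rep_R2[OF fh frs] have rs: "r = 0" "s = 0" and tSa: "t \<in> supp N T al" and tSb: "t \<in> supp N T al'" by auto
  have a'd: "diagonal N al'" using a'pos unfolding pos_root_def by simp
  obtain u v where uv: "x0 < u" "u < y0" "y0 < v" "v < x0 + int N" "t = pi N u v"
    using tSa unfolding Sa_iff supp_l_def by blast
  have tT: "t \<in> T" using tSa unfolding supp_def by simp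
  have t0: "(u, v) \<in> TP x0 y0" using uv tT cr_strip[OF s0 uv(1-4)] unfolding TP_def Tpt_def by simp
  obtain x1 y1 where Q: "strip N x1 y1" "al' = pi N x1 y1" "inC x1 y1 (u, v)"
    using lift_Q[OF t0 _ a'd] tSb uv(5) by blast
  have nz: "f (pp (u, v)) 0 0 \<noteq> 0" using frs rs uv(5) unfolding pp_def by simp
  have le: "x0 \<le> x1" "y0 \<le> y1" using G1[OF Q(1,2) t0 Q(3) nz] by auto
  have bg: "boxgood P0 (x1, y1)" using box_from_t[OF t0 Q(3) le] .
  define w0 where "w0 = can (nat (x1 - x0)) (nat (y1 - y0))"
  define p0 where "p0 = img P0 w0"
  have e0: "endp P0 w0 = (x1, y1)" unfolding w0_def endp_counts P0 using le by simp
  have v0: "valid P0 w0" using valid_box bg e0 by simp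
  have pv0: "piv_path N T p0" "hd p0 = al" "last p0 = al'"
    using valid_piv[OF v0] hd_img last_img P0al e0 Q(2) unfolding p0_def pp_def by auto
  define c where "c p = (if p = p0 then f t 0 0 else 0)" for p
  have cfree: "c \<in> free_hom N T al al'"
    unfolding free_hom_def c_def using pv0 by (auto intro: finite_subset[of _ "{p0}"])
  have th: "Theta_lin N T c = (\<lambda>i r s. f t 0 0 * Theta_path N T p0 i r s)"
  proof -
    have "Theta_lin N T c = (\<lambda>i r s. \<Sum>p\<in>{p0}. c p * Theta_path N T p i r s)"
      by (rule Theta_lin_finite) (auto simp: c_def)
    then show ?thesis by (simp add: c_def)
  qed
  have ne: "p0 \<noteq> []" unfolding p0_def img_def by simp
  have wb: "\<And>q. q \<in> set (walk P0 w0) \<Longrightarrow> x0 \<le> fst q \<and> fst q \<le> x1 \<and> y0 \<le> snd q \<and> snd q \<le> y1"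
    using walk_box e0 P0 by fastforce
  have key: "f i 0 0 = f t 0 0 * (if \<forall>\<beta>\<in>set p0. i \<in> supp N T \<beta> then 1 else 0)" for i
  proof (cases "\<forall>\<beta>\<in>set p0. i \<in> supp N T \<beta>")
    case True
    have P0in: "pp P0 \<in> set p0" "pp (x1, y1) \<in> set p0" unfolding p0_def img_def
      using hd_walk[of P0 w0] walk_ne[of P0 w0] last_walk[of P0 w0] e0
      by (metis hd_in_set image_eqI set_map, metis last_in_set image_eqI set_map)
    have iSa: "i \<in> supp N T al" using True P0in P0al by auto
    have iSb: "i \<in> supp N T (pi N x1 y1)" using True P0in unfolding pp_def by auto
    obtain ui vi where i1: "x0 < ui" "ui < y0" "y0 < vi" "vi < x0 + int N" "i = pi N ui vi"
      using iSa unfolding Sa_iff supp_l_def by blast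
    have iT: "i \<in> T" using iSa unfolding supp_def by simp
    obtain ui' vi' where i2: "x1 < ui'" "ui' < y1" "y1 < vi'" "vi' < x1 + int N" "i = pi N ui' vi'"
      using iSb supp_pi[OF Q(1)] unfolding supp_l_def by blast
    have "ui = ui' \<and> vi = vi'" using lift_same[of x0 y0 x1 y1 ui vi ui' vi'] bg le i1 i2 iT P0 by simp
    then have iK: "(ui, vi) \<in> K x1 y1"
      using i1 i2 iT cr_strip[OF s0 i1(1-4)] unfolding K_def TP_def inC_def Tpt_def by auto
    have tK: "(u, v) \<in> K x1 y1" using t0 Q(3) unfolding K_def by simp
    have "f i 0 0 = f t 0 0" using K_const[OF Q(1,2) iK tK] i1(5) uv(5) unfolding pp_def by simp
    then show ?thesis using True by simp
  next
    case False
    then obtain \<beta> where b: "\<beta> \<in> set p0" "i \<notin> supp N T \<beta>" by blast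
    then obtain q where q: "q \<in> set (walk P0 w0)" "\<beta> = pp q" unfolding p0_def img_def by auto
    have "f i 0 0 = 0"
    proof (rule ccontr)
      assume fi: "f i 0 0 \<noteq> 0"
      from rep_R2[OF fh fi] have iSa: "i \<in> supp N T al" and iSb: "i \<in> supp N T al'" by auto
      obtain ui vi where i1: "x0 < ui" "ui < y0" "y0 < vi" "vi < x0 + int N" "i = pi N ui vi"
        using iSa unfolding Sa_iff supp_l_def by blast
      have iT: "i \<in> T" using iSa unfolding supp_def by simp
      have i0: "(ui, vi) \<in> TP x0 y0" using i1 iT cr_strip[OF s0 i1(1-4)] unfolding TP_def Tpt_def by simp
      obtain x2 y2 where Q2: "strip N x2 y2" "al' = pi N x2 y2" "inC x2 y2 (ui, vi)"
        using lift_Q[OF i0 _ a'd] iSb i1(5) by blast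
      have nz2: "f (pp (ui, vi)) 0 0 \<noteq> 0" using fi i1(5) unfolding pp_def by simp
      have le2: "x0 \<le> x2" "y0 \<le> y2" using G1[OF Q2(1,2) i0 Q2(3) nz2] by auto
      have bg2: "boxgood P0 (x2, y2)" using box_from_t[OF i0 Q2(3) le2] .
      have "(x2, y2) = (x1, y1)"
        using lift_unique[of "(x2, y2)" "(x1, y1)"] bg bg2 le le2 Q(2) Q2(2) P0 unfolding pp_def by simp
      then have C: "x1 < ui" "ui < y1" "y1 < vi" "vi < x1 + int N" using Q2(3) unfolding inC_def by auto
      have qb: "x0 \<le> fst q" "fst q \<le> x1" "y0 \<le> snd q" "snd q \<le> y1" using wb[OF q(1)] by auto
      have sq: "strip N (fst q) (snd q)" using boxgood_strip[OF bg] qb P0 by auto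
      have "i \<in> supp N T \<beta>" unfolding q(2) pp_def i1(5)
        by (rule supp_box[OF sq]) (use qb C i1 iT in auto)
      then show False using b(2) by simp
    qed
    then show ?thesis using False by (subst if_not_P) auto
  qed
  have "Theta_lin N T c = f"
  proof (intro ext)
    fix i r' s'
    show "Theta_lin N T c i r' s' = f i r' s'"
    proof (cases "r' = 0 \<and> s' = 0")
      case True
      then show ?thesis using th key[of i] Theta_path_formula[OF ne, of N T i 0 0] by simp
    next
      case False
      then have "f i r' s' = 0" using rep_R2[OF fh] by blast
      moreover have "Theta_path N T p0 i r' s' = 0"
        by (subst Theta_path_formula[OF ne]) (use False in auto)
      ultimately show ?thesis using th by simp
    qed
  qed
  then show ?thesis using cfree by blast
qed

end

theorem mainTheorem3:
  fixes n :: nat and T :: "nat set set" and \<alpha> \<alpha>' :: "nat set"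
  assumes "triangulation (n + 3) T"
    and "pos_root (n + 3) T \<alpha>" and "pos_root (n + 3) T \<alpha>'"
  shows "(\<forall>f \<in> rep_hom (n + 3) T (Theta_obj (n + 3) T \<alpha>) (Theta_obj (n + 3) T \<alpha>').
            \<exists>c \<in> free_hom (n + 3) T \<alpha> \<alpha>'. Theta_lin (n + 3) T c = f)
       \<and> (\<forall>c \<in> free_hom (n + 3) T \<alpha> \<alpha>'.
            Theta_lin (n + 3) T c = (\<lambda>i r s. 0) \<longrightarrow> c \<in> mesh_span (n + 3) T \<alpha> \<alpha>')"
proof -
  interpret tri "n + 3" T by unfold_locales (use assms(1) in auto)
  have d: "diagonal (n + 3) \<alpha>" using assms(2) unfolding pos_root_def by simp
  obtain x0 y0 where xy: "strip (n + 3) x0 y0" "\<alpha> = pi (n + 3) x0 y0"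
    using diag_lift[OF Npos d] by blast
  have g: "good x0 y0" using xy assms(2) unfolding good_def pos_root_def by simp
  interpret pctx "n + 3" T "(x0, y0)" \<alpha> \<alpha>' by unfold_locales (simp add: pp_def xy)
  have A: "\<forall>f \<in> rep_hom (n + 3) T (Theta_obj (n + 3) T \<alpha>) (Theta_obj (n + 3) T \<alpha>').
            \<exists>c \<in> free_hom (n + 3) T \<alpha> \<alpha>'. Theta_lin (n + 3) T c = f"
  proof
    fix f assume fh: "f \<in> rep_hom (n + 3) T (Theta_obj (n + 3) T \<alpha>) (Theta_obj (n + 3) T \<alpha>')"
    interpret fctx "n + 3" T "(x0, y0)" \<alpha> \<alpha>' f x0 y0 by unfold_locales (use g fh in auto)
    show "\<exists>c \<in> free_hom (n + 3) T \<alpha> \<alpha>'. Theta_lin (n + 3) T c = f" using fullness assms(3) .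
  qed
  have B: "\<forall>c \<in> free_hom (n + 3) T \<alpha> \<alpha>'.
            Theta_lin (n + 3) T c = (\<lambda>i r s. 0) \<longrightarrow> c \<in> mesh_span (n + 3) T \<alpha> \<alpha>'"
    using faithful g by simp
  show ?thesis using A B by blast
qed

end
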